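(* Let $q\ge1$, $d=2^q$. For $\tau\in\boldsymbol{\sigma}_q$ let $\mathcal{C}_q^\tau=\{C\in\mathcal{C}_q: C\tau C^\dagger=\pm\tau\}$. Let $V=\mathrm{span}\{\sigma\otimes\hat\sigma:\sigma,\hat\sigma\in\boldsymbol{\sigma}_q,\ \sigma\neq\hat\sigma\}\subseteq\mathcal{M}_d^{\otimes2}$ and, for $\tau\in\boldsymbol{\sigma}_q$, $V^\tau=\mathrm{span}\{\sigma\otimes\hat\sigma:\sigma,\hat\sigma\in\boldsymbol{\sigma}_q,\ \sigma\hat\sigma\in\mathbb{C}\tau\}$. Then: (1) $V=\bigoplus_{\tau'\in\boldsymbol{\sigma}_q}V^{\tau'}$. (2) Suppose that for some $\tau\in\boldsymbol{\sigma}_q$ there is a subspace $W^\tau\subseteq V^\tau$ with $\varphi^{\otimes2}(\hat C)W^\tau\subseteq W^\tau$ for all $\hat C\in\mathcal{C}_q^\tau$. Then for every $\tau'\in\boldsymbol{\sigma}_q$ there exists a subspace $W^{\tau'}\subseteq V^{\tau'}$ isomorphic to $W^\tau$ (with $W^{\tau'}$ for $\tau'=\tau$ being $W^\tau$) such that $W=\bigoplus_{\tau'\in\boldsymbol{\sigma}_q}W^{\tau'}$ satisfies $\varphi^{\otimes2}(C)W\subseteq W$ for all $C\in\mathcal{C}_q$.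
   Context: $\mathcal{M}_d$ is the space of complex $d\times d$ matrices. $X,Y,Z$ are the single-qubit Pauli matrices; $\hat{\mathcal{P}}_q$ is the set of $q$-fold tensor products of elements of $\{\mathbb{1},X,Y,Z\}$; $\boldsymbol{\sigma}_q=\{P/\sqrt d:P\in\hat{\mathcal P}_q\setminus\{\mathbb 1\}\}$. The Pauli group $\mathcal{P}_q\subset U(2^q)$ consists of all $q$-fold tensor products of elements of the group generated by $X,Z,i\mathbb 1_2$; the Clifford group is $\mathcal{C}_q=\{U\in U(2^q):U\mathcal{P}_qU^\dagger\subseteq\mathcal{P}_q\}/U(1)$ (conjugation by $C$ maps each element of $\boldsymbol\sigma_q$ to $\pm$ an element of $\boldsymbol\sigma_q$). The two-copy representation on $\mathcal{M}_d^{\otimes2}$ is $\varphi^{\otimes2}(C)(A\otimes B)=(CAC^\dagger)\otimes(CBC^\dagger)$, extended linearly. *)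

theory Defs
  imports "Jordan_Normal_Form.Matrix"
begin

definition kron :: "complex mat \<Rightarrow> complex mat \<Rightarrow> complex mat" where
  "kron A B = mat (dim_row A * dim_row B) (dim_col A * dim_col B)
     (\<lambda>(i,j). A $$ (i div dim_row B, j div dim_col B) * B $$ (i mod dim_row B, j mod dim_col B))"

fun kron_list :: "complex mat list \<Rightarrow> complex mat" where
  "kron_list [] = 1\<^sub>m 1"
| "kron_list (A # As) = kron A (kron_list As)"

definition adj :: "complex mat \<Rightarrow> complex mat" where
  "adj A = mat (dim_col A) (dim_row A) (\<lambda>(i,j). cnj (A $$ (j,i)))"

definition pI :: "complex mat" where "pI = 1\<^sub>m 2"
definition pX :: "complex mat" where
  "pX = mat 2 2 (\<lambda>(i,j). if i \<noteq> j then 1 else 0)"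
definition pY :: "complex mat" where
  "pY = mat 2 2 (\<lambda>(i,j). if i = 0 \<and> j = 1 then - \<i> else if i = 1 \<and> j = 0 then \<i> else 0)"
definition pZ :: "complex mat" where
  "pZ = mat 2 2 (\<lambda>(i,j). if i = j then (if i = 0 then 1 else -1) else 0)"

definition pauli_hat :: "nat \<Rightarrow> complex mat set" where
  "pauli_hat q = {kron_list Ps | Ps. length Ps = q \<and> set Ps \<subseteq> {pI, pX, pY, pZ}}"

definition sigma :: "nat \<Rightarrow> complex mat set" where
  "sigma q = {complex_of_real (1 / sqrt (2 ^ q)) \<cdot>\<^sub>m P | P. P \<in> pauli_hat q \<and> P \<noteq> 1\<^sub>m (2 ^ q)}"

text \<open>The group generated by X, Z and i*1 (finite, so closure under products suffices).\<close>
inductive_set pauli1_group :: "complex mat set" where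
  gen_X: "pX \<in> pauli1_group"
| gen_Z: "pZ \<in> pauli1_group"
| gen_i: "\<i> \<cdot>\<^sub>m 1\<^sub>m 2 \<in> pauli1_group"
| mult: "A \<in> pauli1_group \<Longrightarrow> B \<in> pauli1_group \<Longrightarrow> A * B \<in> pauli1_group"

definition pauli_group :: "nat \<Rightarrow> complex mat set" where
  "pauli_group q = {kron_list Ps | Ps. length Ps = q \<and> set Ps \<subseteq> pauli1_group}"

text \<open>Clifford group, represented by its unitary representatives (the U(1) quotient
  is immaterial since the conjugation action does not see global phases).\<close>
definition clifford :: "nat \<Rightarrow> complex mat set" where
  "clifford q = {U. U \<in> carrier_mat (2 ^ q) (2 ^ q) \<and> U * adj U = 1\<^sub>m (2 ^ q) \<and>
                    (\<forall>P \<in> pauli_group q. U * P * adj U \<in> pauli_group q)}"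

definition clifford_stab :: "nat \<Rightarrow> complex mat \<Rightarrow> complex mat set" where
  "clifford_stab q \<tau> = {C \<in> clifford q. C * \<tau> * adj C = \<tau> \<or> C * \<tau> * adj C = - \<tau>}"

text \<open>Two-copy representation on M_d (x) M_d, identified with M_{d^2} via kron:
  (C(x)C)(A(x)B)(C(x)C)^dagger = CAC^dagger (x) CBC^dagger.\<close>
definition phi2 :: "complex mat \<Rightarrow> complex mat \<Rightarrow> complex mat" where
  "phi2 C M = kron C C * M * adj (kron C C)"

definition msum :: "nat \<Rightarrow> ('i \<Rightarrow> complex mat) \<Rightarrow> 'i set \<Rightarrow> complex mat" where
  "msum N f I = mat N N (\<lambda>ij. \<Sum>i\<in>I. f i $$ ij)"

definition mspan :: "nat \<Rightarrow> complex mat set \<Rightarrow> complex mat set" where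
  "mspan N S = {msum N (\<lambda>A. c A \<cdot>\<^sub>m A) F | c F. finite F \<and> F \<subseteq> S}"

definition msubspace :: "nat \<Rightarrow> complex mat set \<Rightarrow> bool" where
  "msubspace N W \<longleftrightarrow> W \<subseteq> carrier_mat N N \<and> 0\<^sub>m N N \<in> W \<and>
     (\<forall>A\<in>W. \<forall>B\<in>W. A + B \<in> W) \<and> (\<forall>c. \<forall>A\<in>W. c \<cdot>\<^sub>m A \<in> W)"

definition dsum :: "nat \<Rightarrow> 'i set \<Rightarrow> ('i \<Rightarrow> complex mat set) \<Rightarrow> complex mat set" where
  "dsum N I W = {msum N f I | f. \<forall>i\<in>I. f i \<in> W i}"

definition is_direct_sum :: "nat \<Rightarrow> complex mat set \<Rightarrow> 'i set \<Rightarrow> ('i \<Rightarrow> complex mat set) \<Rightarrow> bool" where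
  "is_direct_sum N V I W \<longleftrightarrow> V = dsum N I W \<and>
     (\<forall>f. (\<forall>i\<in>I. f i \<in> W i) \<and> msum N f I = 0\<^sub>m N N \<longrightarrow> (\<forall>i\<in>I. f i = 0\<^sub>m N N))"

definition lin_iso :: "complex mat set \<Rightarrow> complex mat set \<Rightarrow> bool" where
  "lin_iso W W' \<longleftrightarrow> (\<exists>f. bij_betw f W W' \<and>
     (\<forall>A\<in>W. \<forall>B\<in>W. f (A + B) = f A + f B) \<and> (\<forall>c. \<forall>A\<in>W. f (c \<cdot>\<^sub>m A) = c \<cdot>\<^sub>m f A))"

definition Vspace :: "nat \<Rightarrow> complex mat set" where
  "Vspace q = mspan (2 ^ q * 2 ^ q)
     {kron s s' | s s'. s \<in> sigma q \<and> s' \<in> sigma q \<and> s \<noteq> s'}"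

definition Vtau :: "nat \<Rightarrow> complex mat \<Rightarrow> complex mat set" where
  "Vtau q \<tau> = mspan (2 ^ q * 2 ^ q)
     {kron s s' | s s'. s \<in> sigma q \<and> s' \<in> sigma q \<and> (\<exists>c. s * s' = c \<cdot>\<^sub>m \<tau>)}"

end

theory Submission
  imports Defs "Jordan_Normal_Form.Determinant"
begin

lemma sum_divmod: "(\<Sum>l<(m::nat)*n. f l) = (\<Sum>a<m. \<Sum>b<n. f (a*n+b))"
proof (induction m)
  case 0 then show ?case by simp
next
  case (Suc m)
  have "{..<Suc m * n} = {..<m*n} \<union> {m*n..<m*n+n}" by auto
  hence "(\<Sum>l<Suc m*n. f l) = (\<Sum>l<m*n. f l) + (\<Sum>l\<in>{m*n..<m*n+n}. f l)"
    by (simp add: sum.union_disjoint ivl_disj_int)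
  also have "(\<Sum>l\<in>{m*n..<m*n+n}. f l) = (\<Sum>b<n. f (m*n+b))"
  proof -
    have "(\<Sum>l\<in>{m*n..<m*n+n}. f l) = (\<Sum>l\<in>{0+m*n..<n+m*n}. f l)" by (simp add: add.commute)
    also have "\<dots> = (\<Sum>b\<in>{0..<n}. f (b+m*n))" by (rule sum.shift_bounds_nat_ivl)
    finally show ?thesis by (simp add: atLeast0LessThan add.commute)
  qed
  finally show ?case using Suc by simp
qed

lemma kron_carrier[simp]: "kron A B \<in> carrier_mat (dim_row A * dim_row B) (dim_col A * dim_col B)"
  by (simp add: kron_def)

lemma kron_dims[simp]: "dim_row (kron A B) = dim_row A * dim_row B" "dim_col (kron A B) = dim_col A * dim_col B"
  by (simp_all add: kron_def)

lemma kron_index[simp]: "i < dim_row A * dim_row B \<Longrightarrow> j < dim_col A * dim_col B \<Longrightarrow>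
  kron A B $$ (i,j) = A $$ (i div dim_row B, j div dim_col B) * B $$ (i mod dim_row B, j mod dim_col B)"
  by (simp add: kron_def)

lemma kron_mult:
  assumes A: "A \<in> carrier_mat n1 m1" and B: "B \<in> carrier_mat n2 m2"
    and C: "C \<in> carrier_mat m1 k1" and D: "D \<in> carrier_mat m2 k2"
  shows "kron A B * kron C D = kron (A*C) (B*D)"
proof (rule eq_matI)
  show "dim_row (kron A B * kron C D) = dim_row (kron (A*C) (B*D))" using A B C D by simp
  show "dim_col (kron A B * kron C D) = dim_col (kron (A*C) (B*D))" using A B C D by simp
  fix i j assume i: "i < dim_row (kron (A*C) (B*D))" and j: "j < dim_col (kron (A*C) (B*D))"
  hence i': "i < n1*n2" and j': "j < k1*k2" using A B C D by auto
  have n2: "n2 > 0" using i' by (cases "n2 = 0") auto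
  have k2: "k2 > 0" using j' by (cases "k2 = 0") auto
  have id1: "i div n2 < n1" using i' n2 by (simp add: less_mult_imp_div_less)
  have id2: "i mod n2 < n2" using n2 by simp
  have jd1: "j div k2 < k1" using j' k2 by (simp add: less_mult_imp_div_less)
  have jd2: "j mod k2 < k2" using k2 by simp
  have "(kron A B * kron C D) $$ (i,j) = (\<Sum>l<m1*m2. kron A B $$ (i,l) * kron C D $$ (l,j))"
    using A B C D i' j' by (simp add: scalar_prod_def lessThan_atLeast0)
  also have "\<dots> = (\<Sum>a<m1. \<Sum>b<m2. kron A B $$ (i,a*m2+b) * kron C D $$ (a*m2+b,j))"
    by (rule sum_divmod)
  also have "\<dots> = (\<Sum>a<m1. \<Sum>b<m2. (A $$ (i div n2, a) * C $$ (a, j div k2)) * (B $$ (i mod n2, b) * D $$ (b, j mod k2)))"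
  proof (intro sum.cong refl)
    fix a b assume a: "a \<in> {..<m1}" and b: "b \<in> {..<m2}"
    have l1: "a*m2+b < (a+1)*m2" using b by simp
    have l2: "(a+1)*m2 \<le> m1*m2" using a by (intro mult_le_mono1) simp
    have l: "a*m2+b < m1*m2" using l1 l2 by linarith
    have dv: "(a*m2+b) div m2 = a" "(a*m2+b) mod m2 = b" using b by auto
    show "kron A B $$ (i,a*m2+b) * kron C D $$ (a*m2+b,j) = (A $$ (i div n2, a) * C $$ (a, j div k2)) * (B $$ (i mod n2, b) * D $$ (b, j mod k2))"
      using A B C D i' j' l dv by (simp add: mult_ac)
  qed
  also have "\<dots> = (\<Sum>a<m1. A $$ (i div n2, a) * C $$ (a, j div k2)) * (\<Sum>b<m2. B $$ (i mod n2, b) * D $$ (b, j mod k2))"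
    by (simp add: sum_product)
  also have "\<dots> = kron (A*C) (B*D) $$ (i,j)"
    using A B C D i' j' id1 id2 jd1 jd2 by (simp add: scalar_prod_def lessThan_atLeast0)
  finally show "(kron A B * kron C D) $$ (i,j) = kron (A*C) (B*D) $$ (i,j)" .
qed



lemma adj_carrier[simp]: "adj A \<in> carrier_mat (dim_col A) (dim_row A)"
  by (simp add: adj_def)
lemma adj_dims[simp]: "dim_row (adj A) = dim_col A" "dim_col (adj A) = dim_row A"
  by (simp_all add: adj_def)
lemma adj_index[simp]: "i < dim_col A \<Longrightarrow> j < dim_row A \<Longrightarrow> adj A $$ (i,j) = cnj (A $$ (j,i))"
  by (simp add: adj_def)
lemma adj_carrier2: "A \<in> carrier_mat n m \<Longrightarrow> adj A \<in> carrier_mat m n"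
  unfolding carrier_mat_def by simp

lemma adj_adj[simp]: "adj (adj A) = A"
  by (rule eq_matI) auto

lemma adj_mult: assumes "A \<in> carrier_mat n m" "B \<in> carrier_mat m k"
  shows "adj (A*B) = adj B * adj A"
proof (rule eq_matI)
  fix i j assume "i < dim_row (adj B * adj A)" "j < dim_col (adj B * adj A)"
  hence i: "i < k" and j: "j < n" using assms by auto
  have "adj (A*B) $$ (i,j) = cnj (\<Sum>l<m. A $$ (j,l) * B $$ (l,i))"
    using assms i j by (simp add: scalar_prod_def lessThan_atLeast0)
  also have "\<dots> = (\<Sum>l<m. cnj (B $$ (l,i)) * cnj (A $$ (j,l)))"
    by (simp add: mult.commute)
  also have "\<dots> = (adj B * adj A) $$ (i,j)"
    using assms i j by (simp add: scalar_prod_def lessThan_atLeast0)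
  finally show "adj (A*B) $$ (i,j) = (adj B * adj A) $$ (i,j)" .
qed (use assms in auto)

lemma adj_one[simp]: "adj (1\<^sub>m n) = 1\<^sub>m n"
  by (rule eq_matI) auto

lemma adj_zero[simp]: "adj (0\<^sub>m n m) = 0\<^sub>m m n"
  by (rule eq_matI) auto

lemma adj_smult[simp]: "adj (c \<cdot>\<^sub>m A) = cnj c \<cdot>\<^sub>m adj A"
  by (rule eq_matI) auto

lemma adj_uminus[simp]: "adj (- A) = - adj A"
  by (rule eq_matI) auto

lemma adj_add: assumes "A \<in> carrier_mat n m" "B \<in> carrier_mat n m"
  shows "adj (A + B) = adj A + adj B"
  by (rule eq_matI) (use assms in auto)

lemma adj_kron: "adj (kron A B) = kron (adj A) (adj B)"
proof (rule eq_matI)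
  fix i j assume i: "i < dim_row (kron (adj A) (adj B))" and j: "j < dim_col (kron (adj A) (adj B))"
  hence i': "i < dim_col A * dim_col B" and j': "j < dim_row A * dim_row B" by auto
  have b: "dim_col B > 0" "dim_row B > 0" using i' j' by (auto intro!: gr0I)
  have "i div dim_col B < dim_col A" "j div dim_row B < dim_row A"
    using i' j' by (auto simp: less_mult_imp_div_less)
  thus "adj (kron A B) $$ (i,j) = kron (adj A) (adj B) $$ (i,j)"
    using i' j' b by simp
qed auto

lemma kron_smult_left[simp]: "kron (c \<cdot>\<^sub>m A) B = c \<cdot>\<^sub>m kron A B"
proof (rule eq_matI)
  fix i j assume "i < dim_row (c \<cdot>\<^sub>m kron A B)" "j < dim_col (c \<cdot>\<^sub>m kron A B)"
  hence i': "i < dim_row A * dim_row B" and j': "j < dim_col A * dim_col B" by auto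
  have b: "dim_col B > 0" "dim_row B > 0" using i' j' by (auto intro!: gr0I)
  have "i div dim_row B < dim_row A" "j div dim_col B < dim_col A"
    using i' j' by (auto simp: less_mult_imp_div_less)
  thus "kron (c \<cdot>\<^sub>m A) B $$ (i,j) = (c \<cdot>\<^sub>m kron A B) $$ (i,j)"
    using i' j' b by simp
qed auto
lemma kron_smult_right[simp]: "kron A (c \<cdot>\<^sub>m B) = c \<cdot>\<^sub>m kron A B"
proof (rule eq_matI)
  fix i j assume "i < dim_row (c \<cdot>\<^sub>m kron A B)" "j < dim_col (c \<cdot>\<^sub>m kron A B)"
  hence i': "i < dim_row A * dim_row B" and j': "j < dim_col A * dim_col B" by auto
  have b: "dim_col B > 0" "dim_row B > 0" using i' j' by (auto intro!: gr0I)
  show "kron A (c \<cdot>\<^sub>m B) $$ (i,j) = (c \<cdot>\<^sub>m kron A B) $$ (i,j)"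
    using i' j' b by simp
qed auto

lemma kron_one: "kron (1\<^sub>m n) (1\<^sub>m m) = 1\<^sub>m (n*m)"
proof (rule eq_matI)
  fix i j assume "i < dim_row (1\<^sub>m (n*m))" "j < dim_col (1\<^sub>m (n*m))"
  hence i: "i < n*m" and j: "j < n*m" by auto
  have m: "m > 0" using i by (auto intro!: gr0I)
  have "i div m < n" "j div m < n" using i j by (auto simp: less_mult_imp_div_less)
  moreover have "(i div m = j div m \<and> i mod m = j mod m) \<longleftrightarrow> i = j"
    by (metis div_mult_mod_eq)
  ultimately show "kron (1\<^sub>m n) (1\<^sub>m m) $$ (i,j) = 1\<^sub>m (n*m) $$ (i,j)"
    using i j m by auto
qed auto


definition hs :: "complex mat \<Rightarrow> complex mat \<Rightarrow> complex" where
  "hs A B = (\<Sum>i<dim_row B. \<Sum>j<dim_col B. cnj (A $$ (i,j)) * B $$ (i,j))"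

lemma hs_kron:
  assumes A: "A \<in> carrier_mat n1 m1" and B: "B \<in> carrier_mat n2 m2"
    and C: "C \<in> carrier_mat n1 m1" and D: "D \<in> carrier_mat n2 m2"
  shows "hs (kron A B) (kron C D) = hs A C * hs B D"
proof -
  have "hs (kron A B) (kron C D) = (\<Sum>i<n1*n2. \<Sum>j<m1*m2. cnj (kron A B $$ (i,j)) * kron C D $$ (i,j))"
    using C D by (simp add: hs_def)
  also have "\<dots> = (\<Sum>a<n1. \<Sum>b<n2. \<Sum>c<m1. \<Sum>d<m2. (cnj (A $$ (a,c)) * C $$ (a,c)) * (cnj (B $$ (b,d)) * D $$ (b,d)))"
    unfolding sum_divmod
  proof (intro sum.cong refl)
    fix a b c d assume a: "a \<in> {..<n1}" and b: "b \<in> {..<n2}" and c: "c \<in> {..<m1}" and d: "d \<in> {..<m2}"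
    have l1: "a*n2+b < n1*n2"
    proof -
      have "a*n2+b < (a+1)*n2" using b by simp
      also have "\<dots> \<le> n1*n2" using a by (intro mult_le_mono1) simp
      finally show ?thesis .
    qed
    have l2: "c*m2+d < m1*m2"
    proof -
      have "c*m2+d < (c+1)*m2" using d by simp
      also have "\<dots> \<le> m1*m2" using c by (intro mult_le_mono1) simp
      finally show ?thesis .
    qed
    have dv: "(a*n2+b) div n2 = a" "(a*n2+b) mod n2 = b" "(c*m2+d) div m2 = c" "(c*m2+d) mod m2 = d"
      using b d by auto
    show "cnj (kron A B $$ (a*n2+b, c*m2+d)) * kron C D $$ (a*n2+b, c*m2+d) =
      (cnj (A $$ (a,c)) * C $$ (a,c)) * (cnj (B $$ (b,d)) * D $$ (b,d))"
      using A B C D l1 l2 dv by (simp add: mult_ac)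
  qed
  also have "\<dots> = (\<Sum>a<n1. \<Sum>c<m1. \<Sum>b<n2. \<Sum>d<m2. (cnj (A $$ (a,c)) * C $$ (a,c)) * (cnj (B $$ (b,d)) * D $$ (b,d)))"
    by (rule sum.cong[OF refl], rule sum.swap)
  also have "\<dots> = hs A C * hs B D"
  proof -
    have dd: "dim_row C = n1" "dim_col C = m1" "dim_row D = n2" "dim_col D = m2" using C D by auto
    show ?thesis unfolding hs_def dd
      by (unfold sum_distrib_right, unfold sum_distrib_left, rule refl)
  qed
  finally show ?thesis .
qed

lemma hs_self_zero:
  assumes A: "A \<in> carrier_mat n m" and h: "hs A A = 0"
  shows "A = 0\<^sub>m n m"
proof -
  have e: "cnj (A $$ (i,j)) * A $$ (i,j) = complex_of_real ((cmod (A $$ (i,j)))\<^sup>2)" for i j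
    by (metis complex_norm_square mult.commute of_real_power)
  have "complex_of_real (\<Sum>i<n. \<Sum>j<m. (cmod (A $$ (i,j)))\<^sup>2) = hs A A"
    using A unfolding hs_def by (simp add: e of_real_sum)
  hence z: "(\<Sum>i<n. \<Sum>j<m. (cmod (A $$ (i,j)))\<^sup>2) = 0" using h by (metis of_real_eq_0_iff)
  have "\<forall>i\<in>{..<n}. (\<Sum>j<m. (cmod (A $$ (i,j)))\<^sup>2) = 0"
    using z by (subst sum_nonneg_eq_0_iff[symmetric]) (auto intro: sum_nonneg)
  hence "\<forall>i<n. \<forall>j<m. (cmod (A $$ (i,j)))\<^sup>2 = 0"
    by (subst (asm) sum_nonneg_eq_0_iff) auto
  hence "\<forall>i<n. \<forall>j<m. A $$ (i,j) = 0" by auto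
  thus ?thesis using A by (intro eq_matI) auto
qed

lemma hs_add_right: assumes "B \<in> carrier_mat n m" "C \<in> carrier_mat n m"
  shows "hs A (B + C) = hs A B + hs A C"
  using assms by (simp add: hs_def algebra_simps sum.distrib)

lemma hs_smult_right[simp]: "hs A (c \<cdot>\<^sub>m B) = c * hs A B"
  by (simp add: hs_def sum_distrib_left mult_ac)

lemma hs_smult_left: assumes "A \<in> carrier_mat n m" "B \<in> carrier_mat n m"
  shows "hs (c \<cdot>\<^sub>m A) B = cnj c * hs A B"
  using assms by (simp add: hs_def sum_distrib_left mult_ac)

lemma hs_uminus_right[simp]: "hs A (- B) = - hs A B"
  by (simp add: hs_def sum_negf)

lemma hs_zero_right[simp]: "hs A (0\<^sub>m n m) = 0"
  by (simp add: hs_def)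

lemma sum2: "(\<Sum>i<2. f i) = f 0 + f (1::nat)"
  by (simp add: numeral_2_eq_2)

lemma sum2': "(\<Sum>i\<in>{0..<2}. f i) = f 0 + f (1::nat)"
  by (simp add: numeral_2_eq_2)

lemma mat2_eq: assumes "A \<in> carrier_mat 2 2" "B \<in> carrier_mat 2 2"
  "A $$ (0,0) = B $$ (0,0)" "A $$ (0,1) = B $$ (0,1)" "A $$ (1,0) = B $$ (1,0)" "A $$ (1,1) = B $$ (1,1)"
  shows "A = B"
proof (rule eq_matI)
  fix i j assume "i < dim_row B" "j < dim_col B"
  hence "i = 0 \<or> i = 1" "j = 0 \<or> j = 1" using assms by auto
  thus "A $$ (i,j) = B $$ (i,j)" using assms by auto
qed (use assms in auto)

lemma mult2: assumes "A \<in> carrier_mat 2 2" "B \<in> carrier_mat 2 2" "i < 2" "j < 2"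
  shows "(A*B) $$ (i,j) = A $$ (i,0) * B $$ (0,j) + A $$ (i,1) * B $$ (1,j)"
  using assms by (simp add: scalar_prod_def sum2')

definition pm :: "nat \<Rightarrow> complex mat" where
  "pm a = (if a = 1 then pX else if a = 2 then pY else if a = 3 then pZ else pI)"

definition mi :: "nat \<Rightarrow> nat \<Rightarrow> nat" where
  "mi a b = (if a = 0 then b else if b = 0 then a else if a = b then 0 else 6 - a - b)"

definition ph :: "nat \<Rightarrow> nat \<Rightarrow> complex" where
  "ph a b = (if a = 0 \<or> b = 0 \<or> a = b then 1 else
     if (a = 1 \<and> b = 2) \<or> (a = 2 \<and> b = 3) \<or> (a = 3 \<and> b = 1) then \<i> else - \<i>)"

definition anti :: "nat \<Rightarrow> nat \<Rightarrow> bool" where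
  "anti a b \<longleftrightarrow> a \<noteq> 0 \<and> b \<noteq> 0 \<and> a \<noteq> b"

definition pe :: "nat \<Rightarrow> nat \<Rightarrow> nat \<Rightarrow> complex" where
  "pe a i j = (if a = 1 then (if i \<noteq> j then 1 else 0)
     else if a = 2 then (if i = 0 \<and> j = 1 then - \<i> else if i = 1 \<and> j = 0 then \<i> else 0)
     else if a = 3 then (if i = j then (if i = 0 then 1 else -1) else 0)
     else (if i = j then 1 else 0))"

lemma pm_carrier[simp]: "pm a \<in> carrier_mat 2 2"
  by (simp add: pm_def pX_def pY_def pZ_def pI_def)

lemma pm_dims[simp]: "dim_row (pm a) = 2" "dim_col (pm a) = 2"
  using carrier_matD[OF pm_carrier[of a]] by auto

lemma pm_mult_carrier[simp]: "pm a * pm b \<in> carrier_mat 2 2"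
  by (rule mult_carrier_mat[OF pm_carrier pm_carrier])

lemma pm_adj_carrier[simp]: "adj (pm a) \<in> carrier_mat 2 2"
  using adj_carrier[of "pm a"] by simp

lemma pm_index[simp]: "i < 2 \<Longrightarrow> j < 2 \<Longrightarrow> pm a $$ (i,j) = pe a i j"
  by (auto simp: pm_def pX_def pY_def pZ_def pI_def pe_def)

lemma four_cases: "(a::nat) < 4 \<Longrightarrow> a = 0 \<or> a = 1 \<or> a = 2 \<or> a = 3"
  by auto

lemma pm_mult: assumes "a < 4" "b < 4"
  shows "pm a * pm b = ph a b \<cdot>\<^sub>m pm (mi a b)"
  apply (insert four_cases[OF assms(1)] four_cases[OF assms(2)])
  apply (elim disjE; rule mat2_eq)
  apply (simp_all add: scalar_prod_def sum2' pe_def ph_def mi_def)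
  done

lemma pm_adj: assumes "a < 4" shows "adj (pm a) = pm a"
  apply (insert four_cases[OF assms(1)])
  apply (elim disjE; rule mat2_eq)
  apply (simp_all add: pe_def)
  done

lemma pm_hs: assumes "a < 4" "b < 4"
  shows "hs (pm a) (pm b) = (if a = b then 2 else 0)"
  using four_cases[OF assms(1)] four_cases[OF assms(2)]
  by (elim disjE) (simp_all add: hs_def sum2 pe_def)

lemma smult_smult_mat[simp]: "a \<cdot>\<^sub>m (b \<cdot>\<^sub>m A) = (a * b) \<cdot>\<^sub>m (A :: complex mat)"
  by (rule eq_matI) auto

lemma one_smult_mat[simp]: "(1::complex) \<cdot>\<^sub>m A = A"
  by (rule eq_matI) auto

lemma smult_mult_left[simp]: "dim_col A = dim_row B \<Longrightarrow> (k \<cdot>\<^sub>m A) * B = k \<cdot>\<^sub>m (A * (B :: complex mat))"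
  by (rule eq_matI) (auto simp: scalar_prod_def sum_distrib_left mult_ac)

lemma smult_mult_right[simp]: "A * (k \<cdot>\<^sub>m B) = k \<cdot>\<^sub>m (A * (B :: complex mat))"
  by (rule eq_matI) (auto simp: scalar_prod_def sum_distrib_left mult_ac)

definition S :: "nat list \<Rightarrow> complex mat" where "S as = kron_list (map pm as)"
definition valid :: "nat list \<Rightarrow> bool" where "valid as \<longleftrightarrow> (\<forall>a\<in>set as. a < 4)"

lemma S_simps[simp]: "S [] = 1\<^sub>m 1" "S (a#as) = kron (pm a) (S as)"
  by (simp_all add: S_def)

lemma valid_simps[simp]: "valid []" "valid (a#as) \<longleftrightarrow> a < 4 \<and> valid as"
  by (simp_all add: valid_def)

lemma S_carrier[simp]: "S as \<in> carrier_mat (2^length as) (2^length as)"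
proof (induction as)
  case Nil then show ?case by simp
next
  case (Cons a as)
  then have d: "dim_row (S as) = 2^length as" "dim_col (S as) = 2^length as" by auto
  show ?case using kron_carrier[of "pm a" "S as"] unfolding d by simp
qed

lemma S_dims[simp]: "dim_row (S as) = 2^length as" "dim_col (S as) = 2^length as"
  using carrier_matD[OF S_carrier[of as]] by auto

fun phl :: "nat list \<Rightarrow> nat list \<Rightarrow> complex" where
  "phl (a#as) (b#bs) = ph a b * phl as bs" | "phl _ _ = 1"
fun mil :: "nat list \<Rightarrow> nat list \<Rightarrow> nat list" where
  "mil (a#as) (b#bs) = mi a b # mil as bs" | "mil _ _ = []"
fun anl :: "nat list \<Rightarrow> nat list \<Rightarrow> bool" where
  "anl (a#as) (b#bs) = (anti a b \<noteq> anl as bs)" | "anl _ _ = False"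

lemma mil_length[simp]: "length as = length bs \<Longrightarrow> length (mil as bs) = length as"
  by (induction as bs rule: list_induct2) auto

lemma mi_lt4: "a < 4 \<Longrightarrow> b < 4 \<Longrightarrow> mi a b < 4"
  by (auto simp: mi_def)

lemma mil_valid: "length as = length bs \<Longrightarrow> valid as \<Longrightarrow> valid bs \<Longrightarrow> valid (mil as bs)"
  by (induction as bs rule: list_induct2) (auto simp: mi_lt4)

lemma S_mult: "length as = length bs \<Longrightarrow> valid as \<Longrightarrow> valid bs \<Longrightarrow>
   S as * S bs = phl as bs \<cdot>\<^sub>m S (mil as bs)"
proof (induction as bs rule: list_induct2)
  case Nil then show ?case by simp
next
  case (Cons a as b bs)
  have Sb: "S bs \<in> carrier_mat (2^length as) (2^length as)" using Cons.hyps S_carrier[of bs] by simp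
  have "S (a#as) * S (b#bs) = kron (pm a * pm b) (S as * S bs)"
    by (simp add: kron_mult[OF pm_carrier S_carrier pm_carrier Sb])
  also have "\<dots> = kron (ph a b \<cdot>\<^sub>m pm (mi a b)) (phl as bs \<cdot>\<^sub>m S (mil as bs))"
    using Cons by (simp add: pm_mult)
  also have "\<dots> = phl (a#as) (b#bs) \<cdot>\<^sub>m S (mil (a#as) (b#bs))"
    by (simp add: mult.commute)
  finally show ?case .
qed

lemma mi_same[simp]: "mi a a = 0" by (simp add: mi_def)
lemma ph_same[simp]: "ph a a = 1" by (simp add: ph_def)

lemma mil_same: "mil as as = replicate (length as) 0"
  by (induction as) auto
lemma phl_same: "phl as as = 1"
  by (induction as) auto

lemma S_zero: "S (replicate n 0) = 1\<^sub>m (2^n)"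
proof (induction n)
  case 0 then show ?case by simp
next
  case (Suc n)
  have "pm 0 = 1\<^sub>m 2" by (simp add: pm_def pI_def)
  then show ?case using Suc by (simp add: kron_one)
qed

lemma S_sq: "valid as \<Longrightarrow> S as * S as = 1\<^sub>m (2^length as)"
  using S_mult[of as as] by (simp add: mil_same phl_same S_zero)

lemma S_adj: "valid as \<Longrightarrow> adj (S as) = S as"
  by (induction as) (auto simp: adj_kron pm_adj)

lemma S_hs: "length as = length bs \<Longrightarrow> valid as \<Longrightarrow> valid bs \<Longrightarrow>
  hs (S as) (S bs) = (if as = bs then 2 ^ length as else 0)"
proof (induction as bs rule: list_induct2)
  case Nil then show ?case by (simp add: hs_def)
next
  case (Cons a as b bs)
  have Sb: "S bs \<in> carrier_mat (2^length as) (2^length as)" using Cons.hyps S_carrier[of bs] by simp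
  have "hs (S (a#as)) (S (b#bs)) = hs (pm a) (pm b) * hs (S as) (S bs)"
    by (simp add: hs_kron[OF pm_carrier S_carrier pm_carrier Sb])
  then show ?case using Cons by (simp add: pm_hs)
qed

lemma mi_zero_iff: "a < 4 \<Longrightarrow> b < 4 \<Longrightarrow> mi a b = 0 \<longleftrightarrow> a = b"
  using four_cases[of a] four_cases[of b] by (auto simp: mi_def)

definition nz :: "nat list \<Rightarrow> bool" where "nz as \<longleftrightarrow> (\<exists>a\<in>set as. a \<noteq> 0)"

lemma nz_mil: "length as = length bs \<Longrightarrow> valid as \<Longrightarrow> valid bs \<Longrightarrow> nz (mil as bs) \<longleftrightarrow> as \<noteq> bs"
  by (induction as bs rule: list_induct2) (auto simp: nz_def mi_zero_iff)

lemma nz_iff: "nz as \<longleftrightarrow> as \<noteq> replicate (length as) 0"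
  by (induction as) (auto simp: nz_def)

lemma ph_swap: "a < 4 \<Longrightarrow> b < 4 \<Longrightarrow> ph a b = (if anti a b then -1 else 1) * ph b a"
  using four_cases[of a] four_cases[of b] by (auto simp: ph_def anti_def)
lemma mi_swap: "mi a b = mi b a"
  by (auto simp: mi_def)
lemma anti_swap: "anti a b = anti b a"
  by (auto simp: anti_def)

lemma phl_swap: "length as = length bs \<Longrightarrow> valid as \<Longrightarrow> valid bs \<Longrightarrow> phl as bs = (if anl as bs then -1 else 1) * phl bs as"
proof (induction as bs rule: list_induct2)
  case (Cons a as b bs)
  have "phl (a#as) (b#bs) = ((if anti a b then -1 else 1) * ph b a) * ((if anl as bs then -1 else 1) * phl bs as)"
    using Cons by (simp only: phl.simps valid_simps, subst ph_swap, auto)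
  then show ?case by auto
qed simp

lemma mil_swap: "length as = length bs \<Longrightarrow> mil as bs = mil bs as"
  by (induction as bs rule: list_induct2) (auto simp: mi_swap)

lemma anl_swap: "length as = length bs \<Longrightarrow> anl as bs = anl bs as"
  by (induction as bs rule: list_induct2) (auto simp: anti_swap)

lemma S_comm: "length as = length bs \<Longrightarrow> valid as \<Longrightarrow> valid bs \<Longrightarrow>
  S as * S bs = (if anl as bs then -1 else 1) \<cdot>\<^sub>m (S bs * S as)"
  by (simp add: S_mult phl_swap[of as bs] mil_swap[of as bs] mil_length)

lemma ph_pow: "\<exists>k. ph a b = \<i> ^ k"
proof -
  have "ph a b = 1 \<or> ph a b = \<i> \<or> ph a b = - \<i>" by (auto simp: ph_def)
  then show ?thesis
  proof (elim disjE)
    assume "ph a b = 1" then show ?thesis by (intro exI[of _ 0]) simp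
  next
    assume "ph a b = \<i>" then show ?thesis by (intro exI[of _ 1]) simp
  next
    assume "ph a b = - \<i>" then show ?thesis by (intro exI[of _ 3]) (simp add: eval_nat_numeral)
  qed
qed

lemma phl_pow: "\<exists>k. phl as bs = \<i> ^ k"
proof (induction as bs rule: phl.induct)
  case (1 a as b bs)
  obtain k where "ph a b = \<i>^k" using ph_pow by blast
  moreover obtain l where "phl as bs = \<i>^l" using 1 by blast
  ultimately have "phl (a#as) (b#bs) = \<i>^(k+l)" by (simp add: power_add)
  then show ?case by blast
qed (auto intro: exI[of _ 0])

lemma bool_lemma:
  fixes A B D NA NB DD e e' :: bool
  assumes "\<not>D \<longrightarrow> (A = B)" "\<not>A \<and> \<not>B \<longrightarrow> \<not>D" "\<not>DD \<longrightarrow> (NA = NB)" "\<not>NA \<and> \<not>NB \<longrightarrow> \<not>DD"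
    "e \<longrightarrow> A \<or> NA" "e' \<longrightarrow> B \<or> NB" "e \<noteq> e' \<longrightarrow> D \<or> DD"
  shows "\<exists>f f'. (f \<longrightarrow> NA) \<and> (f' \<longrightarrow> NB) \<and> (f \<noteq> f' \<longrightarrow> DD) \<and> ((e\<noteq>f) \<longrightarrow> A) \<and> ((e'\<noteq>f') \<longrightarrow> B) \<and> ((e\<noteq>f)\<noteq>(e'\<noteq>f') \<longrightarrow> D)"
  using assms by (cases e; cases e'; cases A; cases B; cases NA; cases NB) (simp_all, blast+)

lemma head_lemma:
  assumes "a < 4" "b < 4" "h \<longrightarrow> a \<noteq> 0" "h' \<longrightarrow> b \<noteq> 0" "h \<noteq> h' \<longrightarrow> a \<noteq> b"
  shows "\<exists>r<4. anti a r = h \<and> anti b r = h'"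
proof -
  have "\<exists>r\<in>{0,1,2,3::nat}. anti a r = h \<and> anti b r = h'"
    apply (insert four_cases[OF assms(1)] four_cases[OF assms(2)] assms(3-5))
    apply (elim disjE; cases h; cases h'; auto simp: anti_def)
    done
  then obtain r where "r \<in> {0,1,2,3::nat}" "anti a r = h \<and> anti b r = h'" by blast
  then show ?thesis by (intro exI[of _ r]) auto
qed

lemma exR: "length as = length bs \<Longrightarrow> valid as \<Longrightarrow> valid bs \<Longrightarrow> (e \<longrightarrow> nz as) \<Longrightarrow> (e' \<longrightarrow> nz bs) \<Longrightarrow>
  (e \<noteq> e' \<longrightarrow> as \<noteq> bs) \<Longrightarrow> \<exists>rs. length rs = length as \<and> valid rs \<and> anl as rs = e \<and> anl bs rs = e'"
proof (induction as bs arbitrary: e e' rule: list_induct2)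
  case Nil
  then have "\<not> e" "\<not> e'" by (auto simp: nz_def)
  then show ?case by (intro exI[of _ "[]"]) simp
next
  case (Cons a as b bs)
  have h4: "\<not> nz as \<and> \<not> nz bs \<longrightarrow> as = bs" using Cons.hyps nz_iff[of as] nz_iff[of bs] by auto
  have nzc: "nz (a#as) = (a \<noteq> 0 \<or> nz as)" "nz (b#bs) = (b \<noteq> 0 \<or> nz bs)" by (auto simp: nz_def)
  have b1: "\<not>(a\<noteq>b) \<longrightarrow> ((a\<noteq>0) = (b\<noteq>0))" by simp
  have b2: "\<not>(a\<noteq>0) \<and> \<not>(b\<noteq>0) \<longrightarrow> \<not>(a\<noteq>b)" by simp
  have b3: "\<not>(as\<noteq>bs) \<longrightarrow> (nz as = nz bs)" by simp
  have b4: "\<not>nz as \<and> \<not>nz bs \<longrightarrow> \<not>(as\<noteq>bs)" using h4 by simp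
  have b5: "e \<longrightarrow> a\<noteq>0 \<or> nz as" using Cons.prems(3) nzc by simp
  have b6: "e' \<longrightarrow> b\<noteq>0 \<or> nz bs" using Cons.prems(4) nzc by simp
  have b7: "e \<noteq> e' \<longrightarrow> a\<noteq>b \<or> as\<noteq>bs" using Cons.prems(5) by auto
  obtain f f' where ff: "(f \<longrightarrow> nz as) \<and> (f' \<longrightarrow> nz bs) \<and> (f \<noteq> f' \<longrightarrow> as \<noteq> bs) \<and> ((e\<noteq>f) \<longrightarrow> a \<noteq> 0) \<and>
     ((e'\<noteq>f') \<longrightarrow> b \<noteq> 0) \<and> ((e\<noteq>f)\<noteq>(e'\<noteq>f') \<longrightarrow> a \<noteq> b)"
    using bool_lemma[OF b1 b2 b3 b4 b5 b6 b7] by blast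
  have "\<exists>rs. length rs = length as \<and> valid rs \<and> anl as rs = f \<and> anl bs rs = f'"
    using Cons.IH[of f f'] Cons.prems ff by simp
  then obtain rs where rs: "length rs = length as" "valid rs" "anl as rs = f" "anl bs rs = f'"
    by blast
  have "\<exists>r<4. anti a r = (e \<noteq> f) \<and> anti b r = (e' \<noteq> f')"
    using head_lemma[of a b "e \<noteq> f" "e' \<noteq> f'"] Cons.prems ff by simp
  then obtain r where r: "r < 4" "anti a r = (e \<noteq> f)" "anti b r = (e' \<noteq> f')"
    by blast
  show ?case using rs r by (intro exI[of _ "r # rs"]) auto
qed

definition PG :: "nat \<Rightarrow> complex mat set" where
  "PG q = {\<i>^k \<cdot>\<^sub>m S as | k as. length as = q \<and> valid as}"

lemma pauli1_carrier: "A \<in> pauli1_group \<Longrightarrow> A \<in> carrier_mat 2 2"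
  by (induction rule: pauli1_group.induct) (auto simp: pX_def pZ_def)

lemma pm1: "pm 1 = pX" unfolding pm_def by simp
lemma pm1': "pm (Suc 0) = pX" unfolding pm_def by simp
lemma pm3: "pm 3 = pZ" unfolding pm_def by simp
lemma pm0: "pm 0 = 1\<^sub>m 2" unfolding pm_def pI_def by simp

lemma pauli1_char: "A \<in> pauli1_group \<Longrightarrow> \<exists>k a. a < 4 \<and> A = \<i>^k \<cdot>\<^sub>m pm a"
proof (induction rule: pauli1_group.induct)
  case gen_X show ?case by (rule exI[of _ 0], rule exI[of _ 1]) (simp add: pm1 pm1')
next
  case gen_Z show ?case by (rule exI[of _ 0], rule exI[of _ 3]) (simp add: pm3)
next
  case gen_i show ?case by (rule exI[of _ 1], rule exI[of _ 0]) (simp add: pm0)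
next
  case (mult A B)
  obtain k a where ka: "a < 4" "A = \<i>^k \<cdot>\<^sub>m pm a" using mult by blast
  obtain l b where lb: "b < 4" "B = \<i>^l \<cdot>\<^sub>m pm b" using mult by blast
  obtain m where m: "ph a b = \<i>^m" using ph_pow by blast
  have "A * B = \<i>^(k+l+m) \<cdot>\<^sub>m pm (mi a b)"
    using ka lb m by (simp add: pm_mult power_add mult_ac)
  then show ?case using mi_lt4[OF ka(1) lb(1)] by blast
qed

lemma pm_in: assumes "a < 4" shows "pm a \<in> pauli1_group"
proof -
  have X: "pX \<in> pauli1_group" and Z: "pZ \<in> pauli1_group" and I: "\<i> \<cdot>\<^sub>m 1\<^sub>m 2 \<in> pauli1_group"
    by (rule pauli1_group.intros)+
  have "pm 0 = pm 1 * pm 1" using pm_mult[of 1 1] by (simp add: mi_def ph_def)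
  hence "pm 0 = pX * pX" by (simp add: pm1')
  hence p0: "pm 0 \<in> pauli1_group" using X by (simp add: pauli1_group.mult)
  have "(\<i> \<cdot>\<^sub>m 1\<^sub>m 2) * (pm 1 * pm 3) = pm 2"
    using pm_mult[of 1 3] by (simp add: mi_def ph_def)
  hence p2: "pm 2 \<in> pauli1_group" using X Z I by (metis pm1 pm3 pauli1_group.mult)
  show ?thesis using four_cases[OF assms] p0 p2 X Z by (auto simp: pm1 pm1' pm3)
qed

lemma ipow_in: assumes "A \<in> pauli1_group" shows "\<i>^k \<cdot>\<^sub>m A \<in> pauli1_group"
proof (induction k)
  case 0 then show ?case using assms by simp
next
  case (Suc k)
  have c: "\<i>^k \<cdot>\<^sub>m A \<in> carrier_mat 2 2" using pauli1_carrier[OF assms] by simp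
  have "(\<i> \<cdot>\<^sub>m 1\<^sub>m 2) * (\<i>^k \<cdot>\<^sub>m A) = \<i> \<cdot>\<^sub>m (1\<^sub>m 2 * (\<i>^k \<cdot>\<^sub>m A))"
    by (rule mult_smult_assoc_mat[OF one_carrier_mat c])
  also have "\<dots> = \<i>^(Suc k) \<cdot>\<^sub>m A" using c pauli1_carrier[OF assms] by simp
  finally have "(\<i> \<cdot>\<^sub>m 1\<^sub>m 2) * (\<i>^k \<cdot>\<^sub>m A) = \<i>^(Suc k) \<cdot>\<^sub>m A" .
  then show ?case using Suc pauli1_group.mult[OF pauli1_group.gen_i] by metis
qed

lemma kron_list_char: "set Ps \<subseteq> pauli1_group \<Longrightarrow> \<exists>k as. length as = length Ps \<and> valid as \<and> kron_list Ps = \<i>^k \<cdot>\<^sub>m S as"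
proof (induction Ps)
  case Nil then show ?case by (intro exI[of _ 0] exI[of _ "[]"]) simp
next
  case (Cons P Ps)
  have "P \<in> pauli1_group" using Cons.prems by simp
  then obtain j a where ja: "a < 4" "P = \<i>^j \<cdot>\<^sub>m pm a" using pauli1_char by blast
  obtain k as where kas: "length as = length Ps" "valid as" "kron_list Ps = \<i>^k \<cdot>\<^sub>m S as"
    using Cons by auto
  have "kron_list (P # Ps) = \<i>^(j+k) \<cdot>\<^sub>m S (a # as)" using ja kas by (simp add: power_add mult.commute)
  then show ?case using ja kas by (intro exI[of _ "j+k"] exI[of _ "a#as"]) auto
qed

lemma pauli_group_PG: assumes "q \<ge> 1" shows "pauli_group q = PG q"
proof
  show "pauli_group q \<subseteq> PG q"
  proof
    fix M assume "M \<in> pauli_group q"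
    then obtain Ps where Ps: "M = kron_list Ps" "length Ps = q" "set Ps \<subseteq> pauli1_group"
      unfolding pauli_group_def by blast
    obtain k as where "length as = length Ps" "valid as" "kron_list Ps = \<i>^k \<cdot>\<^sub>m S as"
      using kron_list_char[OF Ps(3)] by blast
    then show "M \<in> PG q" unfolding PG_def using Ps by auto
  qed
  show "PG q \<subseteq> pauli_group q"
  proof
    fix M assume "M \<in> PG q"
    then obtain k as where M: "M = \<i>^k \<cdot>\<^sub>m S as" "length as = q" "valid as" unfolding PG_def by auto
    then obtain a as' where as: "as = a # as'" using assms by (cases as) auto
    have "M = kron_list ((\<i>^k \<cdot>\<^sub>m pm a) # map pm as')" using M as by (simp add: S_def)
    moreover have "set ((\<i>^k \<cdot>\<^sub>m pm a) # map pm as') \<subseteq> pauli1_group"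
      using M as by (auto intro!: ipow_in pm_in simp: valid_def)
    moreover have "length ((\<i>^k \<cdot>\<^sub>m pm a) # map pm as') = q" using M as by simp
    ultimately have "\<exists>Ps. M = kron_list Ps \<and> length Ps = q \<and> set Ps \<subseteq> pauli1_group" by blast
    then show "M \<in> pauli_group q" unfolding pauli_group_def by simp
  qed
qed

definition cq :: "nat \<Rightarrow> complex" where "cq q = complex_of_real (1 / sqrt (2 ^ q))"

lemma paulis_map: "set Ps \<subseteq> {pI, pX, pY, pZ} \<Longrightarrow> \<exists>as. Ps = map pm as \<and> valid as"
proof (induction Ps)
  case Nil then show ?case by simp
next
  case (Cons P Ps)
  obtain as where as: "Ps = map pm as" "valid as" using Cons by auto
  have "P \<in> {pI, pX, pY, pZ}" using Cons.prems by simp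
  moreover have "pm 0 = pI" "pm 1 = pX" "pm 2 = pY" "pm 3 = pZ" by (simp_all add: pm_def)
  ultimately have "P = pm 0 \<or> P = pm 1 \<or> P = pm 2 \<or> P = pm 3" by auto
  moreover have "0 < (4::nat)" "1 < (4::nat)" "2 < (4::nat)" "3 < (4::nat)" by simp_all
  ultimately obtain a where "a < 4" "P = pm a" by blast
  then show ?case using as by (intro exI[of _ "a#as"]) auto
qed

lemma pm_set: "valid as \<Longrightarrow> set (map pm as) \<subseteq> {pI, pX, pY, pZ}"
  by (induction as) (auto simp: pm_def)

lemma S_eq_one_iff: "valid as \<Longrightarrow> S as = 1\<^sub>m (2 ^ length as) \<longleftrightarrow> \<not> nz as"
proof
  assume v: "valid as" and e: "S as = 1\<^sub>m (2 ^ length as)"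
  show "\<not> nz as"
  proof
    assume n: "nz as"
    have "as \<noteq> replicate (length as) 0" using n nz_iff by auto
    hence "hs (S as) (S (replicate (length as) 0)) = 0"
      using S_hs[of as "replicate (length as) 0"] v by (simp add: valid_def)
    moreover have "hs (S as) (S as) = 2 ^ length as" using S_hs[of as as] v by simp
    ultimately show False using e S_zero[of "length as"] by simp
  qed
next
  assume "valid as" "\<not> nz as"
  then show "S as = 1\<^sub>m (2 ^ length as)" using nz_iff S_zero by metis
qed

lemma pauli_hat_char: "pauli_hat q = {S as | as. length as = q \<and> valid as}"
proof
  show "pauli_hat q \<subseteq> {S as | as. length as = q \<and> valid as}"
  proof
    fix M assume "M \<in> pauli_hat q"
    then obtain Ps where Ps: "M = kron_list Ps" "length Ps = q" "set Ps \<subseteq> {pI, pX, pY, pZ}"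
      unfolding pauli_hat_def by blast
    obtain as where "Ps = map pm as" "valid as" using paulis_map[OF Ps(3)] by blast
    then show "M \<in> {S as | as. length as = q \<and> valid as}" using Ps by (auto simp: S_def)
  qed
  show "{S as | as. length as = q \<and> valid as} \<subseteq> pauli_hat q"
  proof
    fix M assume "M \<in> {S as | as. length as = q \<and> valid as}"
    then obtain as where as: "M = S as" "length as = q" "valid as" by blast
    hence "M = kron_list (map pm as) \<and> length (map pm as) = q \<and> set (map pm as) \<subseteq> {pI, pX, pY, pZ}"
      using pm_set by (simp add: S_def)
    then show "M \<in> pauli_hat q" unfolding pauli_hat_def by blast
  qed
qed

lemma sigma_char: "sigma q = {cq q \<cdot>\<^sub>m S as | as. length as = q \<and> valid as \<and> nz as}"
proof
  show "sigma q \<subseteq> {cq q \<cdot>\<^sub>m S as | as. length as = q \<and> valid as \<and> nz as}"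
  proof
    fix M assume "M \<in> sigma q"
    then obtain P where P: "M = cq q \<cdot>\<^sub>m P" "P \<in> pauli_hat q" "P \<noteq> 1\<^sub>m (2^q)"
      unfolding sigma_def cq_def by blast
    then obtain as where as: "P = S as" "length as = q" "valid as" unfolding pauli_hat_char by blast
    hence "nz as" using P(3) S_eq_one_iff by blast
    then show "M \<in> {cq q \<cdot>\<^sub>m S as | as. length as = q \<and> valid as \<and> nz as}" using as P by blast
  qed
  show "{cq q \<cdot>\<^sub>m S as | as. length as = q \<and> valid as \<and> nz as} \<subseteq> sigma q"
  proof
    fix M assume "M \<in> {cq q \<cdot>\<^sub>m S as | as. length as = q \<and> valid as \<and> nz as}"
    then obtain as where as: "M = cq q \<cdot>\<^sub>m S as" "length as = q" "valid as" "nz as" by blast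
    hence "S as \<in> pauli_hat q" "S as \<noteq> 1\<^sub>m (2^q)" using S_eq_one_iff unfolding pauli_hat_char by auto
    then show "M \<in> sigma q" unfolding sigma_def cq_def using as(1) unfolding cq_def by blast
  qed
qed

lemma msum_carrier[simp]: "msum N f I \<in> carrier_mat N N"
  by (simp add: msum_def)
lemma msum_dims[simp]: "dim_row (msum N f I) = N" "dim_col (msum N f I) = N"
  by (simp_all add: msum_def)
lemma msum_index[simp]: "i < N \<Longrightarrow> j < N \<Longrightarrow> msum N f I $$ (i,j) = (\<Sum>x\<in>I. f x $$ (i,j))"
  by (simp add: msum_def)

lemma msum_eqI: "(\<And>i j. i < N \<Longrightarrow> j < N \<Longrightarrow> (\<Sum>x\<in>I. f x $$ (i,j)) = (\<Sum>x\<in>J. g x $$ (i,j)))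
  \<Longrightarrow> msum N f I = msum N g J"
  by (rule eq_matI) auto

lemma msum_cong: "(\<And>x. x \<in> I \<Longrightarrow> f x = g x) \<Longrightarrow> msum N f I = msum N g I"
  by (rule msum_eqI) (auto intro: sum.cong)

lemma msum_empty[simp]: "msum N f {} = 0\<^sub>m N N"
  by (rule eq_matI) auto

lemma msum_add: assumes "\<And>x. x \<in> I \<Longrightarrow> f x \<in> carrier_mat N N" "\<And>x. x \<in> I \<Longrightarrow> g x \<in> carrier_mat N N"
  shows "msum N f I + msum N g I = msum N (\<lambda>x. f x + g x) I"
proof (rule eq_matI)
  fix i j assume "i < dim_row (msum N (\<lambda>x. f x + g x) I)" "j < dim_col (msum N (\<lambda>x. f x + g x) I)"
  hence ij: "i < N" "j < N" by auto
  have "(\<Sum>x\<in>I. (f x + g x) $$ (i,j)) = (\<Sum>x\<in>I. f x $$ (i,j) + g x $$ (i,j))"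
    using ij by (intro sum.cong refl)
      (simp add: assms(1)[THEN carrier_matD(1)] assms(1)[THEN carrier_matD(2)]
         assms(2)[THEN carrier_matD(1)] assms(2)[THEN carrier_matD(2)])
  then show "(msum N f I + msum N g I) $$ (i,j) = msum N (\<lambda>x. f x + g x) I $$ (i,j)"
    using ij by (simp add: sum.distrib)
qed auto

lemma msum_smult: assumes "\<And>x. x \<in> I \<Longrightarrow> f x \<in> carrier_mat N N"
  shows "c \<cdot>\<^sub>m msum N f I = msum N (\<lambda>x. c \<cdot>\<^sub>m f x) I"
proof (rule eq_matI)
  fix i j assume "i < dim_row (msum N (\<lambda>x. c \<cdot>\<^sub>m f x) I)" "j < dim_col (msum N (\<lambda>x. c \<cdot>\<^sub>m f x) I)"
  hence ij: "i < N" "j < N" by auto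
  have "(\<Sum>x\<in>I. (c \<cdot>\<^sub>m f x) $$ (i,j)) = (\<Sum>x\<in>I. c * f x $$ (i,j))"
    using ij by (intro sum.cong refl)
      (simp add: assms(1)[THEN carrier_matD(1)] assms(1)[THEN carrier_matD(2)])
  then show "(c \<cdot>\<^sub>m msum N f I) $$ (i,j) = msum N (\<lambda>x. c \<cdot>\<^sub>m f x) I $$ (i,j)"
    using ij by (simp add: sum_distrib_left)
qed auto

lemma msum_insert: assumes "finite I" "x \<notin> I" "f x \<in> carrier_mat N N"
  shows "msum N f (insert x I) = f x + msum N f I"
  by (rule eq_matI) (use assms in auto)

lemma msum_zero: "(\<And>x. x \<in> I \<Longrightarrow> f x = 0\<^sub>m N N) \<Longrightarrow> msum N f I = 0\<^sub>m N N"
  by (rule eq_matI) auto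

lemma msum_delta: assumes "finite I" "x \<in> I" "f x \<in> carrier_mat N N" "\<And>y. y \<in> I \<Longrightarrow> y \<noteq> x \<Longrightarrow> f y = 0\<^sub>m N N"
  shows "msum N f I = f x"
proof (rule eq_matI)
  fix i j assume "i < dim_row (f x)" "j < dim_col (f x)"
  hence ij: "i < N" "j < N" using assms by auto
  have "(\<Sum>y\<in>I. f y $$ (i,j)) = f x $$ (i,j) + (\<Sum>y\<in>I - {x}. f y $$ (i,j))"
    using assms by (simp add: sum.remove)
  also have "(\<Sum>y\<in>I - {x}. f y $$ (i,j)) = 0"
    using assms ij by (intro sum.neutral) auto
  finally have "(\<Sum>y\<in>I. f y $$ (i,j)) = f x $$ (i,j)" by simp
  then show "msum N f I $$ (i,j) = f x $$ (i,j)" using ij by simp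
qed (use assms in auto)

lemma msum_reindex: assumes "bij_betw p J I"
  shows "msum N f I = msum N (\<lambda>y. f (p y)) J"
proof (rule msum_eqI)
  fix i j show "(\<Sum>x\<in>I. f x $$ (i,j)) = (\<Sum>x\<in>J. f (p x) $$ (i,j))"
    using sum.reindex_bij_betw[OF assms, of "\<lambda>x. f x $$ (i,j)"] by simp
qed

lemma msubspace_carrier: "msubspace N W \<Longrightarrow> A \<in> W \<Longrightarrow> A \<in> carrier_mat N N"
  by (auto simp: msubspace_def)

lemma msubspace_msum: assumes W: "msubspace N W" and "finite I" "\<And>x. x \<in> I \<Longrightarrow> f x \<in> W"
  shows "msum N f I \<in> W"
  using assms(2,3)
proof (induction I rule: finite_induct)
  case empty then show ?case using W by (simp add: msubspace_def)
next
  case (insert x I)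
  have "f x \<in> W" using insert by auto
  hence "f x \<in> carrier_mat N N" using W msubspace_carrier by blast
  hence "msum N f (insert x I) = f x + msum N f I" using msum_insert[OF insert(1) insert(2)] by blast
  moreover have "\<forall>A\<in>W. \<forall>B\<in>W. A + B \<in> W" using W by (simp add: msubspace_def)
  moreover have "msum N f I \<in> W" using insert by simp
  ultimately show ?case using \<open>f x \<in> W\<close> by simp
qed

lemma msum_extend: assumes "finite G" "F \<subseteq> G" "G \<subseteq> carrier_mat N N"
  shows "msum N (\<lambda>A. c A \<cdot>\<^sub>m A) F = msum N (\<lambda>A. (if A \<in> F then c A else 0) \<cdot>\<^sub>m A) G"
proof (rule msum_eqI)
  fix i j assume ij: "i < N" "j < N"
  have "(\<Sum>x\<in>G. ((if x \<in> F then c x else 0) \<cdot>\<^sub>m x) $$ (i,j)) = (\<Sum>x\<in>G. if x \<in> F then (c x \<cdot>\<^sub>m x) $$ (i,j) else 0)"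
  proof (rule sum.cong[OF refl])
    fix x assume "x \<in> G"
    hence "x \<in> carrier_mat N N" using assms by auto
    then show "((if x \<in> F then c x else 0) \<cdot>\<^sub>m x) $$ (i,j) = (if x \<in> F then (c x \<cdot>\<^sub>m x) $$ (i,j) else 0)"
      using ij by auto
  qed
  also have "\<dots> = (\<Sum>x\<in>F. (c x \<cdot>\<^sub>m x) $$ (i,j))"
    using assms by (simp add: sum.inter_restrict[symmetric] Int_absorb1)
  finally show "(\<Sum>x\<in>F. (c x \<cdot>\<^sub>m x) $$ (i,j)) = (\<Sum>x\<in>G. ((if x \<in> F then c x else 0) \<cdot>\<^sub>m x) $$ (i,j))" by simp
qed

lemma mspan_intro: "finite F \<Longrightarrow> F \<subseteq> Gs \<Longrightarrow> X = msum N (\<lambda>A. c A \<cdot>\<^sub>m A) F \<Longrightarrow> X \<in> mspan N Gs"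
  unfolding mspan_def by blast

lemma mspan_subspace: assumes Gs: "Gs \<subseteq> carrier_mat N N"
  shows "msubspace N (mspan N Gs)"
  unfolding msubspace_def
proof (intro conjI ballI allI)
  show "mspan N Gs \<subseteq> carrier_mat N N" unfolding mspan_def by auto
  show "0\<^sub>m N N \<in> mspan N Gs" unfolding mspan_def
    by (rule CollectI, rule exI[of _ "\<lambda>_. 0"], rule exI[of _ "{}"]) simp
next
  fix A B assume "A \<in> mspan N Gs" "B \<in> mspan N Gs"
  then obtain c F d G where A: "A = msum N (\<lambda>A. c A \<cdot>\<^sub>m A) F" "finite F" "F \<subseteq> Gs"
    and B: "B = msum N (\<lambda>A. d A \<cdot>\<^sub>m A) G" "finite G" "G \<subseteq> Gs" unfolding mspan_def by blast
  let ?H = "F \<union> G"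
  let ?c = "\<lambda>A. if A \<in> F then c A else 0" and ?d = "\<lambda>A. if A \<in> G then d A else 0"
  have HS: "?H \<subseteq> carrier_mat N N" using A B Gs by auto
  have "A + B = msum N (\<lambda>A. ?c A \<cdot>\<^sub>m A) ?H + msum N (\<lambda>A. ?d A \<cdot>\<^sub>m A) ?H"
    using A B msum_extend[of ?H F N c] msum_extend[of ?H G N d] HS by auto
  also have "\<dots> = msum N (\<lambda>A. ?c A \<cdot>\<^sub>m A + ?d A \<cdot>\<^sub>m A) ?H"
    using HS by (intro msum_add) auto
  also have "\<dots> = msum N (\<lambda>A. (?c A + ?d A) \<cdot>\<^sub>m A) ?H"
    using HS by (intro msum_cong) (auto simp: add_smult_distrib_right_mat[symmetric])
  finally show "A + B \<in> mspan N Gs" using A B by (intro mspan_intro[of ?H]) auto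
next
  fix k A assume "A \<in> mspan N Gs"
  then obtain c F where A: "A = msum N (\<lambda>B. c B \<cdot>\<^sub>m B) F" "finite F" "F \<subseteq> Gs" unfolding mspan_def by blast
  have FC: "\<And>B. B \<in> F \<Longrightarrow> c B \<cdot>\<^sub>m B \<in> carrier_mat N N" using A(3) Gs by auto
  have "k \<cdot>\<^sub>m msum N (\<lambda>B. c B \<cdot>\<^sub>m B) F = msum N (\<lambda>B. k \<cdot>\<^sub>m (c B \<cdot>\<^sub>m B)) F"
    by (rule msum_smult[OF FC])
  hence "k \<cdot>\<^sub>m A = msum N (\<lambda>B. (k * c B) \<cdot>\<^sub>m B) F" using A(1) by simp
  then show "k \<cdot>\<^sub>m A \<in> mspan N Gs" using A by (intro mspan_intro[of F]) auto
qed

lemma mspan_superset: assumes "Gs \<subseteq> carrier_mat N N" "A \<in> Gs" shows "A \<in> mspan N Gs"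
proof -
  have "A = msum N (\<lambda>B. 1 \<cdot>\<^sub>m B) {A}"
    using assms by (intro eq_matI) auto
  then show ?thesis using assms(2) by (intro mspan_intro[of "{A}" Gs A N "\<lambda>_. 1"]) auto
qed

lemma mspan_least: assumes "msubspace N W" "Gs \<subseteq> W" shows "mspan N Gs \<subseteq> W"
proof
  fix X assume "X \<in> mspan N Gs"
  then obtain c F where X: "X = msum N (\<lambda>A. c A \<cdot>\<^sub>m A) F" "finite F" "F \<subseteq> Gs" unfolding mspan_def by blast
  show "X \<in> W" unfolding X(1)
    using assms X by (intro msubspace_msum) (auto simp: msubspace_def)
qed

lemma dsum_subspace: assumes "\<And>i. i \<in> I \<Longrightarrow> msubspace N (W i)"
  shows "msubspace N (dsum N I W)"
  unfolding msubspace_def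
proof (intro conjI ballI allI)
  show "dsum N I W \<subseteq> carrier_mat N N" unfolding dsum_def by auto
  have "0\<^sub>m N N = msum N (\<lambda>_. 0\<^sub>m N N) I" by (rule msum_zero[symmetric]) simp
  moreover have "\<forall>i\<in>I. 0\<^sub>m N N \<in> W i" using assms by (auto simp: msubspace_def)
  ultimately show "0\<^sub>m N N \<in> dsum N I W" unfolding dsum_def by blast
next
  fix A B assume "A \<in> dsum N I W" "B \<in> dsum N I W"
  then obtain f g where A: "A = msum N f I" "\<forall>i\<in>I. f i \<in> W i" and B: "B = msum N g I" "\<forall>i\<in>I. g i \<in> W i"
    unfolding dsum_def by blast
  have fc: "\<And>i. i \<in> I \<Longrightarrow> f i \<in> carrier_mat N N" using A(2) assms msubspace_carrier by blast
  have gc: "\<And>i. i \<in> I \<Longrightarrow> g i \<in> carrier_mat N N" using B(2) assms msubspace_carrier by blast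
  have "A + B = msum N (\<lambda>i. f i + g i) I"
    unfolding A(1) B(1) using fc gc by (rule msum_add)
  moreover have "\<forall>i\<in>I. f i + g i \<in> W i" using A B assms by (auto simp: msubspace_def)
  ultimately show "A + B \<in> dsum N I W" unfolding dsum_def by blast
next
  fix k A assume "A \<in> dsum N I W"
  then obtain f where A: "A = msum N f I" "\<forall>i\<in>I. f i \<in> W i" unfolding dsum_def by blast
  have fc: "\<And>i. i \<in> I \<Longrightarrow> f i \<in> carrier_mat N N" using A(2) assms msubspace_carrier by blast
  have "k \<cdot>\<^sub>m A = msum N (\<lambda>i. k \<cdot>\<^sub>m f i) I"
    unfolding A(1) using fc by (rule msum_smult)
  moreover have "\<forall>i\<in>I. k \<cdot>\<^sub>m f i \<in> W i" using A assms by (auto simp: msubspace_def)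
  ultimately show "k \<cdot>\<^sub>m A \<in> dsum N I W" unfolding dsum_def by blast
qed

lemma hs_msum: assumes "\<And>x. x \<in> I \<Longrightarrow> f x \<in> carrier_mat N N"
  shows "hs A (msum N f I) = (\<Sum>x\<in>I. hs A (f x))"
proof -
  have "hs A (msum N f I) = (\<Sum>i<N. \<Sum>j<N. \<Sum>x\<in>I. cnj (A $$ (i,j)) * f x $$ (i,j))"
    by (simp add: hs_def sum_distrib_left)
  also have "\<dots> = (\<Sum>i<N. \<Sum>x\<in>I. \<Sum>j<N. cnj (A $$ (i,j)) * f x $$ (i,j))"
    by (rule sum.cong[OF refl], rule sum.swap)
  also have "\<dots> = (\<Sum>x\<in>I. \<Sum>i<N. \<Sum>j<N. cnj (A $$ (i,j)) * f x $$ (i,j))"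
    by (rule sum.swap)
  also have "\<dots> = (\<Sum>x\<in>I. hs A (f x))"
    by (intro sum.cong refl) (simp add: hs_def assms[THEN carrier_matD(1)] assms[THEN carrier_matD(2)])
  finally show ?thesis .
qed

lemma hs_msum_left: assumes "\<And>x. x \<in> I \<Longrightarrow> f x \<in> carrier_mat N N" "B \<in> carrier_mat N N"
  shows "hs (msum N f I) B = (\<Sum>x\<in>I. hs (f x) B)"
proof -
  have "hs (msum N f I) B = (\<Sum>i<N. \<Sum>j<N. \<Sum>x\<in>I. cnj (f x $$ (i,j)) * B $$ (i,j))"
    using assms(2) by (simp add: hs_def sum_distrib_right)
  also have "\<dots> = (\<Sum>i<N. \<Sum>x\<in>I. \<Sum>j<N. cnj (f x $$ (i,j)) * B $$ (i,j))"
    by (rule sum.cong[OF refl], rule sum.swap)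
  also have "\<dots> = (\<Sum>x\<in>I. \<Sum>i<N. \<Sum>j<N. cnj (f x $$ (i,j)) * B $$ (i,j))"
    by (rule sum.swap)
  also have "\<dots> = (\<Sum>x\<in>I. hs (f x) B)"
    using assms(2) by (intro sum.cong refl) (simp add: hs_def)
  finally show ?thesis .
qed

lemma cq_cnj[simp]: "cnj (cq q) = cq q"
  by (simp add: cq_def)

lemma cq_sq: "cq q * cq q * 2 ^ q = 1"
proof -
  have s: "sqrt (2 ^ q) * sqrt (2 ^ q) = (2 ^ q :: real)" by (rule real_sqrt_mult_self[THEN trans]) simp
  have "1 / sqrt (2 ^ q) * (1 / sqrt (2 ^ q)) * 2 ^ q = (2 ^ q) / (sqrt (2 ^ q) * sqrt (2 ^ q) :: real)" by simp
  also have "\<dots> = 1" unfolding s by simp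
  finally have r: "1 / sqrt (2 ^ q) * (1 / sqrt (2 ^ q)) * 2 ^ q = (1::real)" .
  have "cq q * cq q * 2 ^ q = complex_of_real (1 / sqrt (2 ^ q) * (1 / sqrt (2 ^ q)) * 2 ^ q)"
    unfolding cq_def by (simp only: of_real_mult of_real_power of_real_numeral)
  also have "\<dots> = 1" unfolding r by simp
  finally show ?thesis .
qed

lemma cq_nz[simp]: "cq q \<noteq> 0"
  using cq_sq[of q] by auto

lemma sigma_obtain: "\<tau> \<in> sigma q \<Longrightarrow> \<exists>as. \<tau> = cq q \<cdot>\<^sub>m S as \<and> length as = q \<and> valid as \<and> nz as"
  unfolding sigma_char by blast

lemma sigma_carrier: "\<tau> \<in> sigma q \<Longrightarrow> \<tau> \<in> carrier_mat (2^q) (2^q)"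
  using sigma_obtain[of \<tau> q] smult_carrier_mat S_carrier by metis

lemma finite_sigma: "finite (sigma q)"
proof -
  have "finite {as. set as \<subseteq> {..<4::nat} \<and> length as = q}"
    by (rule finite_lists_length_eq) simp
  moreover have "{as. length as = q \<and> valid as \<and> nz as} \<subseteq> {as. set as \<subseteq> {..<4::nat} \<and> length as = q}"
    by (auto simp: valid_def)
  ultimately have "finite {as. length as = q \<and> valid as \<and> nz as}" by (rule finite_subset[rotated])
  hence "finite ((\<lambda>as. cq q \<cdot>\<^sub>m S as) ` {as. length as = q \<and> valid as \<and> nz as})" by simp
  moreover have "sigma q = (\<lambda>as. cq q \<cdot>\<^sub>m S as) ` {as. length as = q \<and> valid as \<and> nz as}"
    unfolding sigma_char by auto
  ultimately show ?thesis by simp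
qed

lemma hs_cq: assumes "length as = q" "length bs = q" "valid as" "valid bs"
  shows "hs (cq q \<cdot>\<^sub>m S as) (cq q \<cdot>\<^sub>m S bs) = (if as = bs then 1 else 0)"
proof -
  have "hs (cq q \<cdot>\<^sub>m S as) (cq q \<cdot>\<^sub>m S bs) = cq q * cq q * hs (S as) (S bs)"
  proof -
    have ca: "S as \<in> carrier_mat (2^q) (2^q)" "S bs \<in> carrier_mat (2^q) (2^q)"
      using S_carrier[of as] S_carrier[of bs] assms by simp_all
    show ?thesis using hs_smult_left[OF ca, of "cq q"] by (simp add: mult_ac)
  qed
  also have "\<dots> = (if as = bs then 1 else 0)" using S_hs[of as bs] assms cq_sq[of q] by simp
  finally show ?thesis .
qed

lemma sigma_hs: assumes "\<tau> \<in> sigma q" "\<tau>' \<in> sigma q"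
  shows "hs \<tau> \<tau>' = (if \<tau> = \<tau>' then 1 else 0)"
proof -
  obtain as where a: "\<tau> = cq q \<cdot>\<^sub>m S as" "length as = q" "valid as" using sigma_obtain[OF assms(1)] by blast
  obtain bs where b: "\<tau>' = cq q \<cdot>\<^sub>m S bs" "length bs = q" "valid bs" using sigma_obtain[OF assms(2)] by blast
  have h: "hs \<tau> \<tau>' = (if as = bs then 1 else 0)" using a b hs_cq by simp
  have "hs \<tau>' \<tau>' = 1" using b hs_cq by simp
  then show ?thesis using h a b by auto
qed

lemma sigma_prop: assumes "\<tau> \<in> sigma q" "\<tau>' \<in> sigma q" "\<tau> = a \<cdot>\<^sub>m \<tau>'"
  shows "\<tau> = \<tau>' \<and> a = 1"
proof -
  have "hs \<tau>' \<tau> = a * hs \<tau>' \<tau>'" using assms(3) by simp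
  hence e: "hs \<tau>' \<tau> = a" using sigma_hs[OF assms(2) assms(2)] by simp
  show ?thesis
  proof (cases "\<tau> = \<tau>'")
    case True then show ?thesis using e sigma_hs[OF assms(2) assms(2)] by simp
  next
    case False
    hence "a = 0" using e sigma_hs[OF assms(2) assms(1)] by auto
    hence "hs \<tau> \<tau> = 0" using assms(3) by simp
    then show ?thesis using sigma_hs[OF assms(1) assms(1)] by simp
  qed
qed

lemma sigma_adj: "\<tau> \<in> sigma q \<Longrightarrow> adj \<tau> = \<tau>"
  using sigma_obtain[of \<tau> q] S_adj by auto

lemma sigma_prod: assumes "s \<in> sigma q" "s' \<in> sigma q"
  shows "\<exists>as bs. s * s' = (cq q * phl as bs) \<cdot>\<^sub>m (cq q \<cdot>\<^sub>m S (mil as bs)) \<and> s = cq q \<cdot>\<^sub>m S as \<and> s' = cq q \<cdot>\<^sub>m S bs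
     \<and> length as = q \<and> length bs = q \<and> valid as \<and> valid bs \<and> nz as \<and> nz bs"
proof -
  obtain as where a: "s = cq q \<cdot>\<^sub>m S as" "length as = q" "valid as" "nz as" using sigma_obtain[OF assms(1)] by blast
  obtain bs where b: "s' = cq q \<cdot>\<^sub>m S bs" "length bs = q" "valid bs" "nz bs" using sigma_obtain[OF assms(2)] by blast
  have "s * s' = (cq q * cq q) \<cdot>\<^sub>m (S as * S bs)" using a b by simp
  also have "\<dots> = (cq q * phl as bs) \<cdot>\<^sub>m (cq q \<cdot>\<^sub>m S (mil as bs))" using S_mult[of as bs] a b by (simp add: mult_ac)
  finally show ?thesis using a b by blast
qed

lemma phl_nz: "phl as bs \<noteq> 0"
  using phl_pow[of as bs] by auto

lemma sigma_prod_tau: assumes "s \<in> sigma q" "s' \<in> sigma q" "s \<noteq> s'"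
  shows "\<exists>\<tau>\<in>sigma q. \<exists>c. s * s' = c \<cdot>\<^sub>m \<tau>"
proof -
  obtain as bs where ab: "s * s' = (cq q * phl as bs) \<cdot>\<^sub>m (cq q \<cdot>\<^sub>m S (mil as bs))" "s = cq q \<cdot>\<^sub>m S as" "s' = cq q \<cdot>\<^sub>m S bs"
     "length as = q" "length bs = q" "valid as" "valid bs"
    using sigma_prod[OF assms(1,2)] by blast
  have "as \<noteq> bs" using ab assms(3) by auto
  hence "nz (mil as bs)" using nz_mil ab by simp
  hence "cq q \<cdot>\<^sub>m S (mil as bs) \<in> sigma q" unfolding sigma_char using ab mil_valid by auto
  then show ?thesis using ab(1) by blast
qed

lemma sigma_prod_nz: assumes "s \<in> sigma q" "s' \<in> sigma q"
  shows "s * s' \<noteq> 0\<^sub>m (2^q) (2^q)"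
proof
  assume z: "s * s' = 0\<^sub>m (2^q) (2^q)"
  obtain as bs where ab: "s * s' = (cq q * phl as bs) \<cdot>\<^sub>m (cq q \<cdot>\<^sub>m S (mil as bs))"
     "length as = q" "length bs = q" "valid as" "valid bs"
    using sigma_prod[OF assms(1,2)] by blast
  have "hs (S (mil as bs)) (s * s') = cq q * phl as bs * cq q * hs (S (mil as bs)) (S (mil as bs))"
    unfolding ab(1) by (simp add: mult_ac)
  also have "\<dots> = cq q * phl as bs * cq q * 2 ^ q" using S_hs[of "mil as bs" "mil as bs"] ab mil_valid by simp
  finally have "hs (S (mil as bs)) (s * s') \<noteq> 0" using phl_nz[of as bs] by simp
  then show False using z by simp
qed

lemma sigma_hs_one: assumes "\<tau> \<in> sigma q" shows "hs \<tau> (1\<^sub>m (2^q)) = 0"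
proof -
  obtain as where a: "\<tau> = cq q \<cdot>\<^sub>m S as" "length as = q" "valid as" "nz as" using sigma_obtain[OF assms] by blast
  have "hs (S as) (S (replicate q 0)) = 0" using S_hs[of as "replicate q 0"] a nz_iff[of as] by (auto simp: valid_def)
  moreover have ca: "S as \<in> carrier_mat (2^q) (2^q)" "S (replicate q 0) \<in> carrier_mat (2^q) (2^q)"
      using S_carrier[of as] S_carrier[of "replicate q 0"] a by simp_all
  ultimately show ?thesis using a hs_smult_left[OF ca, of "cq q"] S_zero[of q] by simp
qed

lemma sigma_sq: assumes "s \<in> sigma q" shows "s * s = (cq q * cq q) \<cdot>\<^sub>m 1\<^sub>m (2^q)"
proof -
  obtain as where a: "s = cq q \<cdot>\<^sub>m S as" "length as = q" "valid as" using sigma_obtain[OF assms] by blast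
  then show ?thesis using S_sq[of as] by simp
qed

lemma sigma_prod_ne: assumes "s \<in> sigma q" "s' \<in> sigma q" "\<tau> \<in> sigma q" "s * s' = c \<cdot>\<^sub>m \<tau>"
  shows "s \<noteq> s'"
proof
  assume e: "s = s'"
  hence "(cq q * cq q) \<cdot>\<^sub>m 1\<^sub>m (2^q) = c \<cdot>\<^sub>m \<tau>" using sigma_sq assms by metis
  hence "hs \<tau> ((cq q * cq q) \<cdot>\<^sub>m 1\<^sub>m (2^q)) = c * hs \<tau> \<tau>" by simp
  hence "0 = c" using sigma_hs_one[OF assms(3)] sigma_hs[OF assms(3) assms(3)] by simp
  hence "s * s' = 0\<^sub>m (2^q) (2^q)" using assms(4) sigma_carrier[OF assms(3)] by auto
  then show False using sigma_prod_nz[OF assms(1,2)] by simp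
qed

lemma sigma_prod_unique: assumes "s \<in> sigma q" "s' \<in> sigma q" "\<tau> \<in> sigma q" "\<tau>' \<in> sigma q"
  "s * s' = c \<cdot>\<^sub>m \<tau>" "s * s' = c' \<cdot>\<^sub>m \<tau>'"
  shows "\<tau> = \<tau>'"
proof (rule ccontr)
  assume ne: "\<tau> \<noteq> \<tau>'"
  have "hs \<tau>' (c \<cdot>\<^sub>m \<tau>) = hs \<tau>' (c' \<cdot>\<^sub>m \<tau>')" using assms by simp
  hence "c' = 0" using sigma_hs[OF assms(4) assms(3)] sigma_hs[OF assms(4) assms(4)] ne by simp
  hence "s * s' = 0\<^sub>m (2^q) (2^q)" using assms(6) sigma_carrier[OF assms(4)] by auto
  then show False using sigma_prod_nz[OF assms(1,2)] by simp
qed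

definition gens :: "nat \<Rightarrow> complex mat \<Rightarrow> complex mat set" where
  "gens q \<tau> = {kron s s' | s s'. s \<in> sigma q \<and> s' \<in> sigma q \<and> (\<exists>c. s * s' = c \<cdot>\<^sub>m \<tau>)}"
definition vg :: "nat \<Rightarrow> complex mat set" where
  "vg q = {kron s s' | s s'. s \<in> sigma q \<and> s' \<in> sigma q \<and> s \<noteq> s'}"

lemma dsum_intro: "\<forall>i\<in>I. f i \<in> W i \<Longrightarrow> X = msum N f I \<Longrightarrow> X \<in> dsum N I W"
  unfolding dsum_def by blast

lemma Vtau_gens: "Vtau q \<tau> = mspan (2^q * 2^q) (gens q \<tau>)"
  unfolding Vtau_def gens_def ..
lemma Vspace_vg: "Vspace q = mspan (2^q * 2^q) (vg q)"
  unfolding Vspace_def vg_def ..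

lemma kron_sigma_carrier: "s \<in> sigma q \<Longrightarrow> s' \<in> sigma q \<Longrightarrow> kron s s' \<in> carrier_mat (2^q * 2^q) (2^q * 2^q)"
  using kron_carrier[of s s'] sigma_carrier[of s q] sigma_carrier[of s' q] by auto

lemma gens_carrier: "gens q \<tau> \<subseteq> carrier_mat (2^q * 2^q) (2^q * 2^q)"
  unfolding gens_def using kron_sigma_carrier by blast
lemma vg_carrier: "vg q \<subseteq> carrier_mat (2^q * 2^q) (2^q * 2^q)"
  unfolding vg_def using kron_sigma_carrier by blast

lemma Vtau_subspace: "msubspace (2^q * 2^q) (Vtau q \<tau>)"
  unfolding Vtau_gens by (rule mspan_subspace[OF gens_carrier])
lemma Vspace_subspace: "msubspace (2^q * 2^q) (Vspace q)"
  unfolding Vspace_vg by (rule mspan_subspace[OF vg_carrier])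

lemma gens_orth: assumes "\<tau> \<in> sigma q" "\<tau>' \<in> sigma q" "\<tau> \<noteq> \<tau>'" "G \<in> gens q \<tau>" "H \<in> gens q \<tau>'"
  shows "hs G H = 0"
proof -
  obtain s s' c where G: "G = kron s s'" "s \<in> sigma q" "s' \<in> sigma q" "s * s' = c \<cdot>\<^sub>m \<tau>"
    using assms(4) unfolding gens_def by blast
  obtain t t' c' where H: "H = kron t t'" "t \<in> sigma q" "t' \<in> sigma q" "t * t' = c' \<cdot>\<^sub>m \<tau>'"
    using assms(5) unfolding gens_def by blast
  have "hs G H = hs s t * hs s' t'"
    unfolding G(1) H(1) by (rule hs_kron[OF sigma_carrier[OF G(2)] sigma_carrier[OF G(3)] sigma_carrier[OF H(2)] sigma_carrier[OF H(3)]])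
  moreover have "\<not> (s = t \<and> s' = t')"
  proof
    assume "s = t \<and> s' = t'"
    then have "\<tau> = \<tau>'" using sigma_prod_unique[OF G(2) G(3) assms(1) assms(2) G(4)] H(4) by simp
    then show False using assms(3) by simp
  qed
  ultimately show ?thesis using sigma_hs[OF G(2) H(2)] sigma_hs[OF G(3) H(3)] by auto
qed

lemma Vtau_orth: assumes "\<tau> \<in> sigma q" "\<tau>' \<in> sigma q" "\<tau> \<noteq> \<tau>'" "G \<in> gens q \<tau>" "Y \<in> Vtau q \<tau>'"
  shows "hs G Y = 0"
proof -
  obtain c F where Y: "Y = msum (2^q * 2^q) (\<lambda>B. c B \<cdot>\<^sub>m B) F" "finite F" "F \<subseteq> gens q \<tau>'"
    using assms(5) unfolding Vtau_gens mspan_def by blast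
  have FC2: "\<And>B. B \<in> F \<Longrightarrow> B \<in> carrier_mat (2^q * 2^q) (2^q * 2^q)"
    using Y(3) gens_carrier by blast
  have FC: "\<And>B. B \<in> F \<Longrightarrow> c B \<cdot>\<^sub>m B \<in> carrier_mat (2^q * 2^q) (2^q * 2^q)"
    using FC2 by simp
  have "hs G Y = (\<Sum>B\<in>F. hs G (c B \<cdot>\<^sub>m B))" unfolding Y(1) by (rule hs_msum[OF FC])
  also have "\<dots> = (\<Sum>B\<in>F. c B * hs G B)" by simp
  also have "\<dots> = 0" using gens_orth[OF assms(1-4)] Y(3) by (intro sum.neutral) auto
  finally show ?thesis .
qed

lemma Vtau_zero: assumes "X \<in> Vtau q \<tau>" "\<And>G. G \<in> gens q \<tau> \<Longrightarrow> hs G X = 0"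
  shows "X = 0\<^sub>m (2^q * 2^q) (2^q * 2^q)"
proof -
  obtain c F where X: "X = msum (2^q * 2^q) (\<lambda>B. c B \<cdot>\<^sub>m B) F" "finite F" "F \<subseteq> gens q \<tau>"
    using assms(1) unfolding Vtau_gens mspan_def by blast
  have FC2: "\<And>B. B \<in> F \<Longrightarrow> B \<in> carrier_mat (2^q * 2^q) (2^q * 2^q)"
    using X(3) gens_carrier by blast
  have FC: "\<And>B. B \<in> F \<Longrightarrow> c B \<cdot>\<^sub>m B \<in> carrier_mat (2^q * 2^q) (2^q * 2^q)"
    using FC2 by simp
  have XC: "X \<in> carrier_mat (2^q * 2^q) (2^q * 2^q)" unfolding X(1) by simp
  have "hs X X = (\<Sum>B\<in>F. hs (c B \<cdot>\<^sub>m B) X)"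
    by (subst (1) X(1), rule hs_msum_left[OF FC XC])
  also have "\<dots> = (\<Sum>B\<in>F. cnj (c B) * hs B X)"
    by (intro sum.cong refl hs_smult_left[OF FC2 XC])
  also have "\<dots> = 0" using assms(2) X(3) by (intro sum.neutral) auto
  finally show ?thesis using hs_self_zero[OF XC] by simp
qed

lemma Vtau_sub_Vspace: assumes "\<tau> \<in> sigma q" shows "Vtau q \<tau> \<subseteq> Vspace q"
proof -
  have "gens q \<tau> \<subseteq> vg q"
  proof
    fix G assume "G \<in> gens q \<tau>"
    then obtain s s' c where G: "G = kron s s'" "s \<in> sigma q" "s' \<in> sigma q" "s * s' = c \<cdot>\<^sub>m \<tau>"
      unfolding gens_def by blast
    have "s \<noteq> s'" by (rule sigma_prod_ne[OF G(2) G(3) assms G(4)])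
    then show "G \<in> vg q" unfolding vg_def using G by blast
  qed
  also have "\<dots> \<subseteq> Vspace q" unfolding Vspace_vg by (intro subsetI mspan_superset[OF vg_carrier])
  finally show ?thesis unfolding Vtau_gens by (intro mspan_least[OF Vspace_subspace])
qed

lemma part1: "is_direct_sum (2 ^ q * 2 ^ q) (Vspace q) (sigma q) (Vtau q)"
  unfolding is_direct_sum_def
proof (intro conjI allI impI)
  let ?N = "2 ^ q * 2 ^ q"
  show "Vspace q = dsum ?N (sigma q) (Vtau q)"
  proof
    have sub: "msubspace ?N (dsum ?N (sigma q) (Vtau q))" by (intro dsum_subspace Vtau_subspace)
    have "vg q \<subseteq> dsum ?N (sigma q) (Vtau q)"
    proof
      fix G assume "G \<in> vg q"
      then obtain s s' where G: "G = kron s s'" "s \<in> sigma q" "s' \<in> sigma q" "s \<noteq> s'" unfolding vg_def by blast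
      obtain \<tau> c where t: "\<tau> \<in> sigma q" "s * s' = c \<cdot>\<^sub>m \<tau>" using sigma_prod_tau[OF G(2-4)] by blast
      have Gg: "G \<in> gens q \<tau>" unfolding gens_def using G t by blast
      have GV: "G \<in> Vtau q \<tau>" unfolding Vtau_gens by (rule mspan_superset[OF gens_carrier Gg])
      have GC: "G \<in> carrier_mat ?N ?N" using gens_carrier Gg by blast
      let ?f = "\<lambda>\<tau>'. if \<tau>' = \<tau> then G else 0\<^sub>m ?N ?N"
      have "msum ?N ?f (sigma q) = G"
        using msum_delta[of "sigma q" \<tau> ?f ?N] finite_sigma t(1) GC by auto
      moreover have "\<forall>\<tau>'\<in>sigma q. ?f \<tau>' \<in> Vtau q \<tau>'"
        using GV Vtau_subspace by (auto simp: msubspace_def)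
      ultimately show "G \<in> dsum ?N (sigma q) (Vtau q)" by (intro dsum_intro[of _ ?f]) auto
    qed
    then show "Vspace q \<subseteq> dsum ?N (sigma q) (Vtau q)" unfolding Vspace_vg by (rule mspan_least[OF sub])
    show "dsum ?N (sigma q) (Vtau q) \<subseteq> Vspace q"
    proof
      fix X assume "X \<in> dsum ?N (sigma q) (Vtau q)"
      then obtain f where f: "X = msum ?N f (sigma q)" "\<forall>\<tau>\<in>sigma q. f \<tau> \<in> Vtau q \<tau>" unfolding dsum_def by blast
      show "X \<in> Vspace q" unfolding f(1)
        by (rule msubspace_msum[OF Vspace_subspace finite_sigma]) (use f(2) Vtau_sub_Vspace in blast)
    qed
  qed
next
  fix f assume f: "(\<forall>\<tau>\<in>sigma q. f \<tau> \<in> Vtau q \<tau>) \<and> msum (2 ^ q * 2 ^ q) f (sigma q) = 0\<^sub>m (2 ^ q * 2 ^ q) (2 ^ q * 2 ^ q)"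
  show "\<forall>\<tau>\<in>sigma q. f \<tau> = 0\<^sub>m (2 ^ q * 2 ^ q) (2 ^ q * 2 ^ q)"
  proof
    fix \<tau>0 assume t0: "\<tau>0 \<in> sigma q"
    show "f \<tau>0 = 0\<^sub>m (2 ^ q * 2 ^ q) (2 ^ q * 2 ^ q)"
    proof (rule Vtau_zero)
      show "f \<tau>0 \<in> Vtau q \<tau>0" using f t0 by blast
      fix G assume G: "G \<in> gens q \<tau>0"
      have FC: "\<And>\<tau>. \<tau> \<in> sigma q \<Longrightarrow> f \<tau> \<in> carrier_mat (2^q * 2^q) (2^q * 2^q)"
        using f Vtau_subspace msubspace_carrier by blast
      have "0 = hs G (msum (2 ^ q * 2 ^ q) f (sigma q))" using f by simp
      also have "\<dots> = (\<Sum>\<tau>\<in>sigma q. hs G (f \<tau>))" by (rule hs_msum[OF FC])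
      also have "\<dots> = hs G (f \<tau>0) + (\<Sum>\<tau>\<in>sigma q - {\<tau>0}. hs G (f \<tau>))"
        using finite_sigma t0 by (simp add: sum.remove)
      also have "(\<Sum>\<tau>\<in>sigma q - {\<tau>0}. hs G (f \<tau>)) = 0"
        using Vtau_orth[OF t0 _ _ G] f by (intro sum.neutral) auto
      finally show "hs G (f \<tau>0) = 0" by simp
    qed
  qed
qed

lemma assoc_sq: "A \<in> carrier_mat n n \<Longrightarrow> B \<in> carrier_mat n n \<Longrightarrow> C \<in> carrier_mat n n \<Longrightarrow> A * B * C = A * (B * C)"
  by (rule assoc_mult_mat)
lemma mult_sq: "A \<in> carrier_mat n n \<Longrightarrow> B \<in> carrier_mat n n \<Longrightarrow> A * B \<in> carrier_mat n n"
  by (rule mult_carrier_mat)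

lemma conj_lemma:
  fixes P R Q :: "complex mat"
  assumes c: "P \<in> carrier_mat n n" "R \<in> carrier_mat n n" "Q \<in> carrier_mat n n"
    and PP: "P * P = 1\<^sub>m n" and RR: "R * R = 1\<^sub>m n" and RP: "R * P = - (P * R)"
    and QP: "Q * P = e1 \<cdot>\<^sub>m (P * Q)" and QR: "Q * R = e2 \<cdot>\<^sub>m (R * Q)"
  shows "(P + R) * Q * (P + R) = (e1 + e2) \<cdot>\<^sub>m Q + (e2 - e1) \<cdot>\<^sub>m (P * R * Q)"
proof -
  have m: "P * Q \<in> carrier_mat n n" "R * Q \<in> carrier_mat n n" "P * R \<in> carrier_mat n n"
    "P * R * Q \<in> carrier_mat n n" using c by auto
  have 1: "P * Q * P = e1 \<cdot>\<^sub>m Q"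
  proof -
    have "P * Q * P = P * (Q * P)" using c by simp
    also have "\<dots> = e1 \<cdot>\<^sub>m (P * (P * Q))" unfolding QP using c by (simp add: mult_smult_distrib)
    also have "P * (P * Q) = Q" using c PP by (simp add: assoc_mult_mat[symmetric])
    finally show ?thesis .
  qed
  have 2: "R * Q * R = e2 \<cdot>\<^sub>m Q"
  proof -
    have "R * Q * R = R * (Q * R)" using c by simp
    also have "\<dots> = e2 \<cdot>\<^sub>m (R * (R * Q))" unfolding QR using c by (simp add: mult_smult_distrib)
    also have "R * (R * Q) = Q" using c RR by (simp add: assoc_mult_mat[symmetric])
    finally show ?thesis .
  qed
  have 3: "P * Q * R = e2 \<cdot>\<^sub>m (P * R * Q)"
  proof -
    have "P * Q * R = P * (Q * R)" using c by simp
    also have "\<dots> = e2 \<cdot>\<^sub>m (P * (R * Q))" unfolding QR using c by (simp add: mult_smult_distrib)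
    also have "P * (R * Q) = P * R * Q" using c by simp
    finally show ?thesis .
  qed
  have 4: "R * Q * P = (- e1) \<cdot>\<^sub>m (P * R * Q)"
  proof -
    have "R * Q * P = R * (Q * P)" using c by simp
    also have "\<dots> = e1 \<cdot>\<^sub>m (R * (P * Q))" unfolding QP using c by (simp add: mult_smult_distrib)
    also have "R * (P * Q) = (R * P) * Q" using c by simp
    also have "\<dots> = - (P * R * Q)" unfolding RP using c by simp
    also have "e1 \<cdot>\<^sub>m (- (P * R * Q)) = (- e1) \<cdot>\<^sub>m (P * R * Q)" by (rule eq_matI) (use m in auto)
    finally show ?thesis .
  qed
  have "(P + R) * Q * (P + R) = (P * Q + R * Q) * (P + R)"
    using c by (simp add: add_mult_distrib_mat)
  also have "\<dots> = (P * Q) * (P + R) + (R * Q) * (P + R)"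
    by (rule add_mult_distrib_mat[OF m(1) m(2) add_carrier_mat[OF c(2), of P]])
  also have "\<dots> = (P * Q * P + P * Q * R) + (R * Q * P + R * Q * R)"
    by (simp add: mult_add_distrib_mat[OF m(1) c(1) c(2)] mult_add_distrib_mat[OF m(2) c(1) c(2)])
  also have "\<dots> = (e1 \<cdot>\<^sub>m Q + e2 \<cdot>\<^sub>m (P * R * Q)) + ((- e1) \<cdot>\<^sub>m (P * R * Q) + e2 \<cdot>\<^sub>m Q)"
    unfolding 1 2 3 4 ..
  also have "\<dots> = (e1 + e2) \<cdot>\<^sub>m Q + (e2 - e1) \<cdot>\<^sub>m (P * R * Q)"
    by (rule eq_matI) (use c m in \<open>auto simp: algebra_simps\<close>)
  finally show ?thesis .
qed

lemma clifford_carrier: "C \<in> clifford q \<Longrightarrow> C \<in> carrier_mat (2^q) (2^q)"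
  by (simp add: clifford_def)
lemma clifford_unit: "C \<in> clifford q \<Longrightarrow> C * adj C = 1\<^sub>m (2^q)"
  by (simp add: clifford_def)
lemma clifford_unit': "C \<in> clifford q \<Longrightarrow> adj C * C = 1\<^sub>m (2^q)"
  using mat_mult_left_right_inverse[OF clifford_carrier adj_carrier2[OF clifford_carrier] clifford_unit] by blast
lemma clifford_pauli: "C \<in> clifford q \<Longrightarrow> P \<in> pauli_group q \<Longrightarrow> C * P * adj C \<in> pauli_group q"
  by (simp add: clifford_def)

lemma pauli_group_carrier: "P \<in> pauli_group q \<Longrightarrow> P \<in> carrier_mat (2^q) (2^q)"
proof -
  assume "P \<in> pauli_group q"
  then obtain Ps where "P = kron_list Ps" "length Ps = q" "set Ps \<subseteq> pauli1_group"
    unfolding pauli_group_def by blast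
  then show "P \<in> carrier_mat (2^q) (2^q)"
  proof (induction Ps arbitrary: P q)
    case Nil then show ?case by simp
  next
    case (Cons A Ps)
    have k: "kron_list Ps \<in> carrier_mat (2^length Ps) (2^length Ps)" using Cons by auto
    have a: "A \<in> carrier_mat 2 2" using Cons pauli1_carrier by auto
    have "kron A (kron_list Ps) \<in> carrier_mat (2 * 2^length Ps) (2 * 2^length Ps)"
      using kron_carrier[of A "kron_list Ps"] carrier_matD[OF k] carrier_matD[OF a] by simp
    then show ?case using Cons.prems(1) Cons.prems(2)[symmetric] by simp
  qed
qed

lemma one_clifford: "1\<^sub>m (2^q) \<in> clifford q"
proof -
  have "\<forall>P\<in>pauli_group q. 1\<^sub>m (2^q) * P * adj (1\<^sub>m (2^q)) \<in> pauli_group q"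
  proof
    fix P assume P: "P \<in> pauli_group q"
    show "1\<^sub>m (2^q) * P * adj (1\<^sub>m (2^q)) \<in> pauli_group q" using pauli_group_carrier[OF P] P by simp
  qed
  then show ?thesis unfolding clifford_def by simp
qed

lemma clifford_mult: assumes "C \<in> clifford q" "D \<in> clifford q" shows "C * D \<in> clifford q"
proof -
  have c: "C \<in> carrier_mat (2^q) (2^q)" "D \<in> carrier_mat (2^q) (2^q)"
    "adj C \<in> carrier_mat (2^q) (2^q)" "adj D \<in> carrier_mat (2^q) (2^q)"
    using assms clifford_carrier adj_carrier2 by blast+
  have adj: "adj (C * D) = adj D * adj C" by (rule adj_mult[OF c(1,2)])
  have "C * D * adj (C * D) = C * (D * adj D) * adj C" unfolding adj using c by (simp add: assoc_sq[where n="2^q"] mult_sq[where n="2^q"])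
  also have "\<dots> = 1\<^sub>m (2^q)" using clifford_unit[OF assms(2)] clifford_unit[OF assms(1)] c by simp
  finally have u: "C * D * adj (C * D) = 1\<^sub>m (2^q)" .
  have p: "C * D * P * adj (C * D) \<in> pauli_group q" if P: "P \<in> pauli_group q" for P
  proof -
    have DP: "D * P * adj D \<in> pauli_group q" using clifford_pauli[OF assms(2) P] .
    have Pc: "P \<in> carrier_mat (2^q) (2^q)" using pauli_group_carrier[OF P] .
    have "C * D * P * adj (C * D) = C * (D * P * adj D) * adj C" unfolding adj using c Pc by (simp add: assoc_sq[where n="2^q"] mult_sq[where n="2^q"])
    then show ?thesis using clifford_pauli[OF assms(1) DP] by simp
  qed
  show ?thesis unfolding clifford_def using u p c by auto
qed

lemma ipow_real: "cnj (\<i>^k) = \<i>^k \<Longrightarrow> \<i>^k = 1 \<or> \<i>^k = (-1::complex)"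
proof -
  assume h: "cnj (\<i>^k) = \<i>^k"
  have gen: "\<i>^(4*m + r) = \<i>^r" for m r :: nat
  proof -
    have "\<i>^(4*m + r) = (\<i>^4)^m * \<i>^r" by (simp only: power_add power_mult)
    also have "\<i>^4 = (1::complex)" by (simp add: power4_eq_xxxx)
    finally show ?thesis by simp
  qed
  have k: "k = 4 * (k div 4) + k mod 4" by (rule div_mult_mod_eq[symmetric, THEN trans]) (simp add: mult.commute)
  have e: "\<i>^k = \<i>^(k mod 4)" using gen[of "k div 4" "k mod 4"] k by metis
  have i2: "\<i>^2 = (-1::complex)" by (simp add: power2_eq_square)
  have i3: "\<i>^3 = - \<i>" by (simp add: power3_eq_cube)
  have "k mod 4 < 4" by simp
  hence "k mod 4 = 0 \<or> k mod 4 = 1 \<or> k mod 4 = 2 \<or> k mod 4 = 3" by linarith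
  then show ?thesis
  proof (elim disjE)
    assume "k mod 4 = 0" then show ?thesis using e by simp
  next
    assume "k mod 4 = 1" then have "\<i>^k = \<i>" using e by simp
    then show ?thesis using h by simp
  next
    assume "k mod 4 = 2" then show ?thesis using e i2 by simp
  next
    assume "k mod 4 = 3" then have "\<i>^k = - \<i>" using e i3 by simp
    then show ?thesis using h by simp
  qed
qed

lemma PG_carrier: "M \<in> PG q \<Longrightarrow> M \<in> carrier_mat (2^q) (2^q)"
proof -
  assume "M \<in> PG q"
  then obtain k as where "M = \<i>^k \<cdot>\<^sub>m S as" "length as = q" unfolding PG_def by blast
  then show ?thesis using S_carrier[of as] by simp
qed

lemma PG_smult: "M \<in> PG q \<Longrightarrow> \<i>^j \<cdot>\<^sub>m M \<in> PG q"
proof -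
  assume "M \<in> PG q"
  then obtain k as where "M = \<i>^k \<cdot>\<^sub>m S as" "length as = q" "valid as" unfolding PG_def by blast
  hence "\<i>^j \<cdot>\<^sub>m M = \<i>^(j+k) \<cdot>\<^sub>m S as \<and> length as = q \<and> valid as" by (simp add: power_add)
  then show ?thesis unfolding PG_def by blast
qed

lemma PG_S: "length as = q \<Longrightarrow> valid as \<Longrightarrow> S as \<in> PG q"
  unfolding PG_def by (rule CollectI, rule exI[of _ 0], rule exI[of _ as]) simp

lemma PG_neg: "M \<in> PG q \<Longrightarrow> - M \<in> PG q"
proof -
  assume "M \<in> PG q"
  hence "\<i>^2 \<cdot>\<^sub>m M \<in> PG q" by (rule PG_smult)
  moreover have "\<i>^2 \<cdot>\<^sub>m M = - M" by (rule eq_matI) auto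
  ultimately show ?thesis by simp
qed

lemma clifford_conj_sigma: assumes q: "q \<ge> 1" and C: "C \<in> clifford q" and t: "\<tau> \<in> sigma q"
  shows "\<exists>\<tau>'\<in>sigma q. \<exists>e. (e = 1 \<or> e = -1) \<and> C * \<tau> * adj C = e \<cdot>\<^sub>m \<tau>'"
proof -
  obtain as where a: "\<tau> = cq q \<cdot>\<^sub>m S as" "length as = q" "valid as" "nz as" using sigma_obtain[OF t] by blast
  have Cc: "C \<in> carrier_mat (2^q) (2^q)" "adj C \<in> carrier_mat (2^q) (2^q)"
    using C clifford_carrier adj_carrier2 by blast+
  have Sc: "S as \<in> carrier_mat (2^q) (2^q)" using S_carrier[of as] a by simp
  have "S as \<in> pauli_group q" using PG_S[OF a(2,3)] pauli_group_PG[OF q] by simp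
  hence "C * S as * adj C \<in> PG q" using clifford_pauli[OF C] pauli_group_PG[OF q] by simp
  then obtain k bs where b: "C * S as * adj C = \<i>^k \<cdot>\<^sub>m S bs" "length bs = q" "valid bs" unfolding PG_def by blast
  have Sbc: "S bs \<in> carrier_mat (2^q) (2^q)" using S_carrier[of bs] b by simp
  have "adj (C * S as * adj C) = adj (adj C) * adj (C * S as)"
    by (rule adj_mult[OF mult_carrier_mat[OF Cc(1) Sc] Cc(2)])
  also have "\<dots> = C * (S as * adj C)" using adj_mult[OF Cc(1) Sc] S_adj[OF a(3)] by simp
  also have "\<dots> = C * S as * adj C" using Cc Sc by (simp add: assoc_sq[where n="2^q"])
  finally have herm: "adj (C * S as * adj C) = C * S as * adj C" .
  hence "cnj (\<i>^k) \<cdot>\<^sub>m S bs = \<i>^k \<cdot>\<^sub>m S bs" unfolding b(1) using S_adj[OF b(3)] by simp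
  hence "hs (S bs) (cnj (\<i>^k) \<cdot>\<^sub>m S bs) = hs (S bs) (\<i>^k \<cdot>\<^sub>m S bs)" by simp
  hence "cnj (\<i>^k) * 2^q = \<i>^k * 2^q" using S_hs[of bs bs] b by simp
  hence "cnj (\<i>^k) = \<i>^k" by simp
  hence e: "\<i>^k = 1 \<or> \<i>^k = (-1::complex)" by (rule ipow_real)
  have nzb: "nz bs"
  proof (rule ccontr)
    assume "\<not> nz bs"
    hence "S bs = 1\<^sub>m (2^q)" using S_eq_one_iff[OF b(3)] b(2) by simp
    hence CSC: "C * S as * adj C = \<i>^k \<cdot>\<^sub>m 1\<^sub>m (2^q)" using b(1) by simp
    have "S as = adj C * (C * S as * adj C) * C"
    proof -
      have "adj C * (C * S as * adj C) * C = (adj C * C) * S as * (adj C * C)" using Cc Sc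
        by (simp add: assoc_sq[where n="2^q"] mult_sq[where n="2^q"])
      then show ?thesis using clifford_unit'[OF C] a(2) by simp
    qed
    also have "\<dots> = \<i>^k \<cdot>\<^sub>m (adj C * C)" unfolding CSC using Cc by (simp add: mult_smult_distrib)
    also have "\<dots> = \<i>^k \<cdot>\<^sub>m S (replicate q 0)" using clifford_unit'[OF C] S_zero[of q] by simp
    finally have "S as = \<i>^k \<cdot>\<^sub>m S (replicate q 0)" .
    hence "hs (S (replicate q 0)) (S as) = \<i>^k * hs (S (replicate q 0)) (S (replicate q 0))" by simp
    moreover have "hs (S (replicate q 0)) (S as) = 0"
      using S_hs[of "replicate q 0" as] a nz_iff[of as] by (auto simp: valid_def)
    moreover have "hs (S (replicate q 0)) (S (replicate q 0)) = 2^q"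
      using S_hs[of "replicate q 0" "replicate q 0"] by (simp add: valid_def)
    ultimately show False using e by auto
  qed
  have t': "cq q \<cdot>\<^sub>m S bs \<in> sigma q" unfolding sigma_char using b nzb by blast
  have "C * \<tau> * adj C = cq q \<cdot>\<^sub>m (C * S as * adj C)" unfolding a(1) using Cc Sc a(2) by (simp add: mult_smult_distrib assoc_sq[where n="2^q"])
  also have "\<dots> = \<i>^k \<cdot>\<^sub>m (cq q \<cdot>\<^sub>m S bs)" unfolding b(1) by (simp add: mult.commute)
  finally show ?thesis using t' e by blast
qed

definition Um :: "nat list \<Rightarrow> nat list \<Rightarrow> complex mat" where
  "Um as rs = cq 1 \<cdot>\<^sub>m (S as + S rs)"

lemma neg_one_smult: "(-1::complex) \<cdot>\<^sub>m M = - M"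
  by (rule eq_matI) auto

lemma S_anticomm: assumes "length as = length rs" "valid as" "valid rs" "anl as rs"
  shows "S rs * S as = - (S as * S rs)"
proof -
  have "anl rs as" using anl_swap[of rs as] assms by simp
  then show ?thesis using S_comm[of rs as] assms by (simp add: neg_one_smult)
qed

lemma S_comm_e: assumes "length as = length bs" "valid as" "valid bs"
  shows "S bs * S as = (if anl bs as then -1 else 1) \<cdot>\<^sub>m (S as * S bs)"
  using S_comm[of bs as] assms by simp

lemma cq1: "cq 1 * cq 1 * 2 = 1" using cq_sq[of 1] by simp
lemma cq1': "cq 1 * (cq 1 * 2) = 1" using cq1 by (simp add: mult.assoc)

lemma Um_facts: assumes l: "length as = q" "length rs = q" and v: "valid as" "valid rs" and an: "anl as rs"
  shows "Um as rs \<in> carrier_mat (2^q) (2^q)" "adj (Um as rs) = Um as rs"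
    "Um as rs * Um as rs = 1\<^sub>m (2^q)" "Um as rs * S as * Um as rs = S rs"
proof -
  let ?P = "S as" and ?R = "S rs" and ?n = "2^q"
  have c: "?P \<in> carrier_mat ?n ?n" "?R \<in> carrier_mat ?n ?n" using S_carrier l by metis+
  have PP: "?P * ?P = 1\<^sub>m ?n" using S_sq[OF v(1)] l by simp
  have RR: "?R * ?R = 1\<^sub>m ?n" using S_sq[OF v(2)] l by simp
  have RP: "?R * ?P = - (?P * ?R)" using S_anticomm[of as rs] l v an by simp
  show uc: "Um as rs \<in> carrier_mat (2^q) (2^q)" unfolding Um_def using c by simp
  show "adj (Um as rs) = Um as rs" unfolding Um_def using adj_add[OF c] S_adj v by simp
  have oc: "1\<^sub>m ?n \<in> carrier_mat ?n ?n" by simp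
  have "(?P + ?R) * 1\<^sub>m ?n * (?P + ?R) = (1 + 1) \<cdot>\<^sub>m 1\<^sub>m ?n + (1 - 1) \<cdot>\<^sub>m (?P * ?R * 1\<^sub>m ?n)"
    by (rule conj_lemma[OF c oc PP RR RP]) (use c l in simp_all)
  moreover have "(?P + ?R) * 1\<^sub>m ?n = ?P + ?R" using c l by simp
  moreover have "(1 + 1) \<cdot>\<^sub>m 1\<^sub>m ?n + (1 - 1) \<cdot>\<^sub>m (?P * ?R * 1\<^sub>m ?n) = (2::complex) \<cdot>\<^sub>m 1\<^sub>m ?n"
    by (rule eq_matI) (use c l in auto)
  ultimately have "(?P + ?R) * (?P + ?R) = 2 \<cdot>\<^sub>m 1\<^sub>m ?n" by simp
  hence "Um as rs * Um as rs = cq 1 \<cdot>\<^sub>m (cq 1 \<cdot>\<^sub>m (2 \<cdot>\<^sub>m 1\<^sub>m ?n))" unfolding Um_def using c l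
    by (simp del: smult_smult_mat)
  also have "\<dots> = 1\<^sub>m ?n" by (simp only: smult_smult_mat cq1' one_smult_mat)
  finally show "Um as rs * Um as rs = 1\<^sub>m (2^q)" .
  have PR: "?P * ?R = (-1) \<cdot>\<^sub>m (?R * ?P)" using RP c by (simp add: neg_one_smult)
  have "(?P + ?R) * ?P * (?P + ?R) = (1 + -1) \<cdot>\<^sub>m ?P + (-1 - 1) \<cdot>\<^sub>m (?P * ?R * ?P)"
    by (rule conj_lemma[OF c c(1) PP RR RP]) (use PR c in simp_all)
  moreover have "?P * ?R * ?P = - ?R"
  proof -
    have "?P * ?R * ?P = ?P * (?R * ?P)" using c by simp
    also have "\<dots> = - (?P * ?P * ?R)" unfolding RP using c by simp
    finally show ?thesis using PP c l by simp
  qed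
  ultimately have "(?P + ?R) * ?P * (?P + ?R) = 2 \<cdot>\<^sub>m ?R"
    by (intro eq_matI) (use c l in auto)
  hence "Um as rs * ?P * Um as rs = cq 1 \<cdot>\<^sub>m (cq 1 \<cdot>\<^sub>m (2 \<cdot>\<^sub>m ?R))" unfolding Um_def using c l
    by (simp del: smult_smult_mat)
  also have "\<dots> = ?R" by (simp only: smult_smult_mat cq1' one_smult_mat)
  finally show "Um as rs * S as * Um as rs = S rs" .
qed

lemma PRQ_PG: assumes "length as = q" "length rs = q" "length bs = q" "valid as" "valid rs" "valid bs"
  shows "S as * S rs * S bs \<in> PG q"
proof -
  let ?m = "mil as rs"
  have m: "length ?m = q" "valid ?m" using assms mil_valid by auto
  obtain a where a: "phl as rs = \<i>^a" using phl_pow by blast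
  obtain b where b: "phl ?m bs = \<i>^b" using phl_pow by blast
  have "S as * S rs * S bs = phl as rs \<cdot>\<^sub>m (S ?m * S bs)"
    using S_mult[of as rs] assms m by simp
  also have "\<dots> = \<i>^(a+b) \<cdot>\<^sub>m S (mil ?m bs)" using S_mult[of ?m bs] assms m a b by (simp add: power_add)
  finally show ?thesis using PG_smult[OF PG_S[of "mil ?m bs" q], of "a+b"] mil_valid[of ?m bs] m assms by simp
qed

lemma comb_lemma: assumes h: "h * 2 = (1::complex)" and A: "A \<in> carrier_mat n n" and B: "B \<in> carrier_mat n n"
  and e: "e1 = 1 \<or> e1 = -1" "e2 = 1 \<or> e2 = -1"
  shows "h \<cdot>\<^sub>m ((e1 + e2) \<cdot>\<^sub>m A + (e2 - e1) \<cdot>\<^sub>m B) = (if e1 = e2 then e1 \<cdot>\<^sub>m A else e2 \<cdot>\<^sub>m B)"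
proof -
  have h2: "h = 1/2" using h by (simp add: eq_divide_eq)
  show ?thesis
    by (rule eq_matI) (use A B e h2 in auto)
qed

lemma Um_clifford: assumes q: "q \<ge> 1" and l: "length as = q" "length rs = q" and v: "valid as" "valid rs"
  and an: "anl as rs"
  shows "Um as rs \<in> clifford q"
proof -
  note UF = Um_facts[OF l v an]
  let ?P = "S as" and ?R = "S rs" and ?n = "2^q"
  have c: "?P \<in> carrier_mat ?n ?n" "?R \<in> carrier_mat ?n ?n" using S_carrier l by metis+
  have PP: "?P * ?P = 1\<^sub>m ?n" using S_sq[OF v(1)] l by simp
  have RR: "?R * ?R = 1\<^sub>m ?n" using S_sq[OF v(2)] l by simp
  have RP: "?R * ?P = - (?P * ?R)" using S_anticomm[of as rs] l v an by simp
  have conjQ: "Um as rs * S bs * Um as rs \<in> PG q" if b: "length bs = q" "valid bs" for bs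
  proof -
    let ?Q = "S bs"
    let ?e1 = "(if anl bs as then -1 else 1) :: complex" and ?e2 = "(if anl bs rs then -1 else 1) :: complex"
    have cQ: "?Q \<in> carrier_mat ?n ?n" using S_carrier b by metis
    have QP: "?Q * ?P = ?e1 \<cdot>\<^sub>m (?P * ?Q)" using S_comm_e[of as bs] l b v by simp
    have QR: "?Q * ?R = ?e2 \<cdot>\<^sub>m (?R * ?Q)" using S_comm_e[of rs bs] l b v by simp
    have cj: "(?P + ?R) * ?Q * (?P + ?R) = (?e1 + ?e2) \<cdot>\<^sub>m ?Q + (?e2 - ?e1) \<cdot>\<^sub>m (?P * ?R * ?Q)"
      by (rule conj_lemma[OF c cQ PP RR RP QP QR])
    have "Um as rs * ?Q * Um as rs = cq 1 \<cdot>\<^sub>m (cq 1 \<cdot>\<^sub>m ((?P + ?R) * ?Q * (?P + ?R)))"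
      unfolding Um_def using c cQ l b by (simp del: smult_smult_mat)
    also have "\<dots> = (cq 1 * cq 1) \<cdot>\<^sub>m ((?e1 + ?e2) \<cdot>\<^sub>m ?Q + (?e2 - ?e1) \<cdot>\<^sub>m (?P * ?R * ?Q))"
      unfolding cj by (simp only: smult_smult_mat)
    also have "\<dots> = (if ?e1 = ?e2 then ?e1 \<cdot>\<^sub>m ?Q else ?e2 \<cdot>\<^sub>m (?P * ?R * ?Q))"
      by (rule comb_lemma) (use cq1 c cQ in \<open>auto simp: mult.assoc\<close>)
    also have "\<dots> \<in> PG q"
    proof -
      have "?Q \<in> PG q" using PG_S[OF b] .
      moreover have "?P * ?R * ?Q \<in> PG q" using PRQ_PG l b v by simp
      ultimately show ?thesis using PG_neg by (auto simp: neg_one_smult)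
    qed
    finally show ?thesis .
  qed
  have "\<forall>M\<in>pauli_group q. Um as rs * M * adj (Um as rs) \<in> pauli_group q"
  proof
    fix M assume "M \<in> pauli_group q"
    then obtain k bs where M: "M = \<i>^k \<cdot>\<^sub>m S bs" "length bs = q" "valid bs"
      using pauli_group_PG[OF q] unfolding PG_def by blast
    have "Um as rs * M * adj (Um as rs) = \<i>^k \<cdot>\<^sub>m (Um as rs * S bs * Um as rs)"
      unfolding M(1) UF(2) using UF(1) M(2) by (simp add: mult_smult_distrib)
    also have "\<dots> \<in> PG q" by (rule PG_smult[OF conjQ[OF M(2,3)]])
    finally show "Um as rs * M * adj (Um as rs) \<in> pauli_group q" using pauli_group_PG[OF q] by simp
  qed
  then show ?thesis unfolding clifford_def using UF by simp
qed

lemma trans_sigma: assumes q: "q \<ge> 1" and t: "\<tau> \<in> sigma q" "\<tau>' \<in> sigma q"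
  shows "\<exists>C. C \<in> clifford q \<and> adj C \<in> clifford q \<and> C * \<tau> * adj C = \<tau>'"
proof (cases "\<tau> = \<tau>'")
  case True
  have "1\<^sub>m (2^q) * \<tau> * adj (1\<^sub>m (2^q)) = \<tau>'" using True sigma_carrier[OF t(1)] by simp
  then show ?thesis using one_clifford[of q] by (intro exI[of _ "1\<^sub>m (2^q)"]) simp
next
  case False
  obtain as where a: "\<tau> = cq q \<cdot>\<^sub>m S as" "length as = q" "valid as" "nz as" using sigma_obtain[OF t(1)] by blast
  obtain bs where b: "\<tau>' = cq q \<cdot>\<^sub>m S bs" "length bs = q" "valid bs" "nz bs" using sigma_obtain[OF t(2)] by blast
  have "as \<noteq> bs" using False a b by auto
  then obtain rs where r: "length rs = q" "valid rs" "anl as rs" "anl bs rs"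
    using exR[of as bs True True] a b by auto
  have r': "anl rs bs" using anl_swap[of rs bs] r b by simp
  let ?U1 = "Um as rs" and ?U2 = "Um rs bs"
  note U1 = Um_facts[OF a(2) r(1) a(3) r(2) r(3)]
  note U2 = Um_facts[OF r(1) b(2) r(2) b(3) r']
  have C1: "?U1 \<in> clifford q" by (rule Um_clifford[OF q a(2) r(1) a(3) r(2) r(3)])
  have C2: "?U2 \<in> clifford q" by (rule Um_clifford[OF q r(1) b(2) r(2) b(3) r'])
  have Sa: "S as \<in> carrier_mat (2^q) (2^q)" using S_carrier a(2) by metis
  have Sr: "S rs \<in> carrier_mat (2^q) (2^q)" using S_carrier r(1) by metis
  have adjC: "adj (?U2 * ?U1) = ?U1 * ?U2" using adj_mult[OF U2(1) U1(1)] U1(2) U2(2) by simp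
  have "?U2 * ?U1 * \<tau> * adj (?U2 * ?U1) = cq q \<cdot>\<^sub>m (?U2 * (?U1 * S as * ?U1) * ?U2)"
    unfolding adjC a(1) using U1(1) U2(1) Sa a(2) carrier_matD[OF U1(1)] carrier_matD[OF U2(1)]
    by (simp add: mult_smult_distrib assoc_sq[where n="2^q"] mult_sq[where n="2^q"])
  also have "\<dots> = \<tau>'" unfolding U1(4) U2(4) b(1) ..
  finally have e: "?U2 * ?U1 * \<tau> * adj (?U2 * ?U1) = \<tau>'" .
  have "?U2 * ?U1 \<in> clifford q" by (rule clifford_mult[OF C2 C1])
  moreover have "adj (?U2 * ?U1) \<in> clifford q" unfolding adjC by (rule clifford_mult[OF C1 C2])
  ultimately show ?thesis using e by blast
qed

lemma kronCC_carrier: "C \<in> carrier_mat d d \<Longrightarrow> kron C C \<in> carrier_mat (d*d) (d*d)"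
  using kron_carrier[of C C] by auto
lemma adj_kronCC_carrier: "C \<in> carrier_mat d d \<Longrightarrow> adj (kron C C) \<in> carrier_mat (d*d) (d*d)"
  using adj_carrier2[OF kronCC_carrier] by blast

lemma phi2_carrier: "C \<in> carrier_mat d d \<Longrightarrow> M \<in> carrier_mat (d*d) (d*d) \<Longrightarrow> phi2 C M \<in> carrier_mat (d*d) (d*d)"
  unfolding phi2_def using kronCC_carrier adj_kronCC_carrier by (metis mult_carrier_mat)

lemma phi2_add: assumes "C \<in> carrier_mat d d" "M1 \<in> carrier_mat (d*d) (d*d)" "M2 \<in> carrier_mat (d*d) (d*d)"
  shows "phi2 C (M1 + M2) = phi2 C M1 + phi2 C M2"
proof -
  have K: "kron C C \<in> carrier_mat (d*d) (d*d)" "adj (kron C C) \<in> carrier_mat (d*d) (d*d)"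
    using kronCC_carrier adj_kronCC_carrier assms(1) by blast+
  have "kron C C * (M1 + M2) = kron C C * M1 + kron C C * M2"
    by (rule mult_add_distrib_mat[OF K(1) assms(2,3)])
  hence "phi2 C (M1 + M2) = (kron C C * M1 + kron C C * M2) * adj (kron C C)" unfolding phi2_def by simp
  also have "\<dots> = phi2 C M1 + phi2 C M2" unfolding phi2_def
    by (rule add_mult_distrib_mat[OF mult_carrier_mat[OF K(1) assms(2)] mult_carrier_mat[OF K(1) assms(3)] K(2)])
  finally show ?thesis .
qed

lemma phi2_smult: assumes "C \<in> carrier_mat d d" "M \<in> carrier_mat (d*d) (d*d)"
  shows "phi2 C (c \<cdot>\<^sub>m M) = c \<cdot>\<^sub>m phi2 C M"
proof -
  have K: "kron C C \<in> carrier_mat (d*d) (d*d)" "adj (kron C C) \<in> carrier_mat (d*d) (d*d)"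
    using kronCC_carrier adj_kronCC_carrier assms(1) by blast+
  show ?thesis unfolding phi2_def using K assms(2) carrier_matD[OF K(1)] carrier_matD[OF assms(2)]
    by (simp add: mult_smult_distrib assoc_sq[where n="d*d"] mult_sq[where n="d*d"])
qed

lemma phi2_zero: assumes "C \<in> carrier_mat d d" shows "phi2 C (0\<^sub>m (d*d) (d*d)) = 0\<^sub>m (d*d) (d*d)"
proof -
  have K: "kron C C \<in> carrier_mat (d*d) (d*d)" "adj (kron C C) \<in> carrier_mat (d*d) (d*d)"
    using kronCC_carrier adj_kronCC_carrier assms(1) by blast+
  show ?thesis unfolding phi2_def
    using right_mult_zero_mat[OF K(1), of "d*d"] left_mult_zero_mat[OF K(2)] by simp
qed

lemma phi2_msum: assumes C: "C \<in> carrier_mat d d" and "finite I" and "\<And>i. i \<in> I \<Longrightarrow> f i \<in> carrier_mat (d*d) (d*d)"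
  shows "phi2 C (msum (d*d) f I) = msum (d*d) (\<lambda>i. phi2 C (f i)) I"
  using assms(2,3)
proof (induction I rule: finite_induct)
  case empty then show ?case using phi2_zero[OF C] by simp
next
  case (insert x I)
  have fx: "f x \<in> carrier_mat (d*d) (d*d)" using insert by auto
  have "phi2 C (msum (d*d) f (insert x I)) = phi2 C (f x + msum (d*d) f I)"
    using msum_insert[where f=f and N="d*d", OF insert(1,2) fx] by simp
  also have "\<dots> = phi2 C (f x) + phi2 C (msum (d*d) f I)" by (rule phi2_add[OF C fx msum_carrier])
  also have "\<dots> = phi2 C (f x) + msum (d*d) (\<lambda>i. phi2 C (f i)) I" using insert by simp
  also have "\<dots> = msum (d*d) (\<lambda>i. phi2 C (f i)) (insert x I)"
    using msum_insert[where f="\<lambda>i. phi2 C (f i)" and N="d*d", OF insert(1,2) phi2_carrier[OF C fx]] by simp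
  finally show ?case .
qed

lemma phi2_kron: assumes C: "C \<in> carrier_mat d d" and A: "A \<in> carrier_mat d d" and B: "B \<in> carrier_mat d d"
  shows "phi2 C (kron A B) = kron (C * A * adj C) (C * B * adj C)"
proof -
  have aC: "adj C \<in> carrier_mat d d" using adj_carrier2[OF C] .
  have "kron C C * kron A B = kron (C * A) (C * B)" by (rule kron_mult[OF C C A B])
  moreover have "adj (kron C C) = kron (adj C) (adj C)" by (rule adj_kron)
  moreover have "kron (C * A) (C * B) * kron (adj C) (adj C) = kron (C * A * adj C) (C * B * adj C)"
    by (rule kron_mult[OF mult_carrier_mat[OF C A] mult_carrier_mat[OF C B] aC aC])
  ultimately show ?thesis unfolding phi2_def by simp
qed

lemma phi2_mult: assumes C: "C \<in> carrier_mat d d" and D: "D \<in> carrier_mat d d" and M: "M \<in> carrier_mat (d*d) (d*d)"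
  shows "phi2 (C * D) M = phi2 C (phi2 D M)"
proof -
  have K: "kron C C \<in> carrier_mat (d*d) (d*d)" "adj (kron C C) \<in> carrier_mat (d*d) (d*d)"
    "kron D D \<in> carrier_mat (d*d) (d*d)" "adj (kron D D) \<in> carrier_mat (d*d) (d*d)"
    using kronCC_carrier adj_kronCC_carrier C D by blast+
  have k: "kron (C * D) (C * D) = kron C C * kron D D" by (rule kron_mult[OF C C D D, symmetric])
  have a: "adj (kron C C * kron D D) = adj (kron D D) * adj (kron C C)"
    by (rule adj_mult[OF K(1) K(3)])
  show ?thesis unfolding phi2_def k a using K M
    by (simp add: assoc_sq[where n="d*d"] mult_sq[where n="d*d"])
qed

lemma phi2_one: assumes M: "M \<in> carrier_mat (d*d) (d*d)" shows "phi2 (1\<^sub>m d) M = M"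
  unfolding phi2_def kron_one using M by simp

lemma phi2_inv: assumes "C \<in> clifford q" "M \<in> carrier_mat (2^q*2^q) (2^q*2^q)"
  shows "phi2 (adj C) (phi2 C M) = M"
proof -
  have C: "C \<in> carrier_mat (2^q) (2^q)" "adj C \<in> carrier_mat (2^q) (2^q)"
    using assms(1) clifford_carrier adj_carrier2 by blast+
  have "phi2 (adj C) (phi2 C M) = phi2 (adj C * C) M" by (rule phi2_mult[OF C(2) C(1) assms(2), symmetric])
  also have "\<dots> = M" using clifford_unit'[OF assms(1)] phi2_one[OF assms(2)] by simp
  finally show ?thesis .
qed

lemma conj_back: assumes C: "C \<in> clifford q" and M: "M \<in> carrier_mat (2^q) (2^q)"
  shows "adj C * (C * M * adj C) * C = M"
proof -
  have c: "C \<in> carrier_mat (2^q) (2^q)" "adj C \<in> carrier_mat (2^q) (2^q)"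
    using C clifford_carrier adj_carrier2 by blast+
  have "adj C * (C * M * adj C) * C = (adj C * C) * M * (adj C * C)"
    using c M by (simp add: assoc_sq[where n="2^q"] mult_sq[where n="2^q"])
  also have "\<dots> = M" using clifford_unit'[OF C] M by simp
  finally show ?thesis .
qed

lemma conj_mult: assumes C: "C \<in> clifford q" and A: "A \<in> carrier_mat (2^q) (2^q)" and B: "B \<in> carrier_mat (2^q) (2^q)"
  shows "(C * A * adj C) * (C * B * adj C) = C * (A * B) * adj C"
proof -
  have c: "C \<in> carrier_mat (2^q) (2^q)" "adj C \<in> carrier_mat (2^q) (2^q)"
    using C clifford_carrier adj_carrier2 by blast+
  have "(C * A * adj C) * (C * B * adj C) = C * A * (adj C * C) * B * adj C"
    using c A B by (simp add: assoc_sq[where n="2^q"] mult_sq[where n="2^q"])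
  also have "\<dots> = C * (A * B) * adj C"
    using clifford_unit'[OF C] c A B by (simp add: assoc_sq[where n="2^q"] mult_sq[where n="2^q"])
  finally show ?thesis .
qed

lemma sign_inv: "e = 1 \<or> e = -1 \<Longrightarrow> X = e \<cdot>\<^sub>m t \<Longrightarrow> t = e \<cdot>\<^sub>m (X :: complex mat)"
  by auto

lemma phi2_gens: assumes q: "q \<ge> 1" and C: "C \<in> clifford q" and t: "\<tau> \<in> sigma q" "\<tau>' \<in> sigma q"
  and ct: "C * \<tau> * adj C = \<tau>'" and B: "B \<in> gens q \<tau>"
  shows "phi2 C B \<in> Vtau q \<tau>'"
proof -
  obtain s s' c where sB: "B = kron s s'" "s \<in> sigma q" "s' \<in> sigma q" "s * s' = c \<cdot>\<^sub>m \<tau>"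
    using B unfolding gens_def by blast
  have Cc: "C \<in> carrier_mat (2^q) (2^q)" using C clifford_carrier by blast
  have sc: "s \<in> carrier_mat (2^q) (2^q)" "s' \<in> carrier_mat (2^q) (2^q)" "\<tau> \<in> carrier_mat (2^q) (2^q)"
    using sB t sigma_carrier by blast+
  obtain u e1 where u: "u \<in> sigma q" "e1 = 1 \<or> e1 = -1" "C * s * adj C = e1 \<cdot>\<^sub>m u"
    using clifford_conj_sigma[OF q C sB(2)] by blast
  obtain u' e2 where u': "u' \<in> sigma q" "e2 = 1 \<or> e2 = -1" "C * s' * adj C = e2 \<cdot>\<^sub>m u'"
    using clifford_conj_sigma[OF q C sB(3)] by blast
  have uc: "u \<in> carrier_mat (2^q) (2^q)" "u' \<in> carrier_mat (2^q) (2^q)" using u u' sigma_carrier by blast+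
  have "phi2 C B = kron (e1 \<cdot>\<^sub>m u) (e2 \<cdot>\<^sub>m u')" unfolding sB(1) phi2_kron[OF Cc sc(1) sc(2)] u(3) u'(3) ..
  also have "\<dots> = (e1 * e2) \<cdot>\<^sub>m kron u u'" by (simp add: mult.commute)
  finally have pB: "phi2 C B = (e1 * e2) \<cdot>\<^sub>m kron u u'" .
  have uu: "u * u' = (e1 * e2 * c) \<cdot>\<^sub>m \<tau>'"
  proof -
    have "u = e1 \<cdot>\<^sub>m (C * s * adj C)" by (rule sign_inv[OF u(2) u(3)])
    moreover have "u' = e2 \<cdot>\<^sub>m (C * s' * adj C)" by (rule sign_inv[OF u'(2) u'(3)])
    ultimately have "u * u' = (e1 * e2) \<cdot>\<^sub>m ((C * s * adj C) * (C * s' * adj C))"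
      using Cc sc carrier_matD[OF Cc] by (simp add: mult_smult_distrib mult.commute)
    also have "(C * s * adj C) * (C * s' * adj C) = C * (s * s') * adj C" by (rule conj_mult[OF C sc(1,2)])
    also have "\<dots> = c \<cdot>\<^sub>m (C * \<tau> * adj C)" unfolding sB(4) using Cc sc carrier_matD[OF Cc]
      by (simp add: mult_smult_distrib)
    finally show ?thesis unfolding ct by simp
  qed
  have "kron u u' \<in> gens q \<tau>'" unfolding gens_def using u(1) u'(1) uu by blast
  hence "kron u u' \<in> Vtau q \<tau>'" unfolding Vtau_gens by (rule mspan_superset[OF gens_carrier])
  then show ?thesis unfolding pB using Vtau_subspace[of q \<tau>'] by (simp add: msubspace_def)
qed

lemma phi2_Vtau: assumes q: "q \<ge> 1" and C: "C \<in> clifford q" and t: "\<tau> \<in> sigma q" "\<tau>' \<in> sigma q"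
  and ct: "C * \<tau> * adj C = \<tau>'" and X: "X \<in> Vtau q \<tau>"
  shows "phi2 C X \<in> Vtau q \<tau>'"
proof -
  obtain c F where XF: "X = msum (2^q * 2^q) (\<lambda>B. c B \<cdot>\<^sub>m B) F" "finite F" "F \<subseteq> gens q \<tau>"
    using X unfolding Vtau_gens mspan_def by blast
  have Cc: "C \<in> carrier_mat (2^q) (2^q)" using C clifford_carrier by blast
  have FC: "\<And>B. B \<in> F \<Longrightarrow> B \<in> carrier_mat (2^q * 2^q) (2^q * 2^q)" using XF(3) gens_carrier by blast
  have "phi2 C X = msum (2^q * 2^q) (\<lambda>B. phi2 C (c B \<cdot>\<^sub>m B)) F"
    unfolding XF(1) by (rule phi2_msum[OF Cc XF(2)]) (use FC in simp)
  also have "\<dots> = msum (2^q * 2^q) (\<lambda>B. c B \<cdot>\<^sub>m phi2 C B) F"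
    by (rule msum_cong) (use phi2_smult[OF Cc] FC in simp)
  also have "\<dots> \<in> Vtau q \<tau>'"
  proof (rule msubspace_msum[OF Vtau_subspace XF(2)])
    fix B assume "B \<in> F"
    hence "phi2 C B \<in> Vtau q \<tau>'" using phi2_gens[OF q C t ct] XF(3) by blast
    then show "c B \<cdot>\<^sub>m phi2 C B \<in> Vtau q \<tau>'" using Vtau_subspace[of q \<tau>'] by (simp add: msubspace_def)
  qed
  finally show ?thesis .
qed

definition perm :: "nat \<Rightarrow> complex mat \<Rightarrow> complex mat \<Rightarrow> complex mat" where
  "perm q C \<tau> = (SOME \<tau>''. \<tau>'' \<in> sigma q \<and> (\<exists>e. (e = 1 \<or> e = -1) \<and> C * \<tau> * adj C = e \<cdot>\<^sub>m \<tau>''))"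

lemma perm_prop: assumes "q \<ge> 1" "C \<in> clifford q" "\<tau> \<in> sigma q"
  shows "perm q C \<tau> \<in> sigma q \<and> (\<exists>e. (e = 1 \<or> e = -1) \<and> C * \<tau> * adj C = e \<cdot>\<^sub>m perm q C \<tau>)"
  unfolding perm_def by (rule someI_ex) (use clifford_conj_sigma[OF assms] in blast)

lemma perm_bij: assumes q: "q \<ge> 1" and C: "C \<in> clifford q"
  shows "bij_betw (perm q C) (sigma q) (sigma q)"
proof -
  have im: "perm q C ` sigma q \<subseteq> sigma q" using perm_prop[OF q C] by blast
  have inj: "inj_on (perm q C) (sigma q)"
  proof (rule inj_onI)
    fix t1 t2 assume t1: "t1 \<in> sigma q" and t2: "t2 \<in> sigma q" and eq: "perm q C t1 = perm q C t2"
    let ?s = "perm q C t1"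
    obtain e1 where e1: "e1 = 1 \<or> e1 = -1" "C * t1 * adj C = e1 \<cdot>\<^sub>m ?s" using perm_prop[OF q C t1] by blast
    obtain e2 where e2: "e2 = 1 \<or> e2 = -1" "C * t2 * adj C = e2 \<cdot>\<^sub>m ?s" using perm_prop[OF q C t2] eq by auto
    have c: "C \<in> carrier_mat (2^q) (2^q)" "adj C \<in> carrier_mat (2^q) (2^q)"
      using C clifford_carrier adj_carrier2 by blast+
    have sc: "?s \<in> carrier_mat (2^q) (2^q)" using perm_prop[OF q C t1] sigma_carrier by blast
    have "t1 = adj C * (e1 \<cdot>\<^sub>m ?s) * C" using conj_back[OF C sigma_carrier[OF t1]] e1(2) by simp
    hence h1: "t1 = e1 \<cdot>\<^sub>m (adj C * ?s * C)" using c sc by (simp add: mult_smult_distrib)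
    have "t2 = adj C * (e2 \<cdot>\<^sub>m ?s) * C" using conj_back[OF C sigma_carrier[OF t2]] e2(2) by simp
    hence h2: "t2 = e2 \<cdot>\<^sub>m (adj C * ?s * C)" using c sc by (simp add: mult_smult_distrib)
    have "t1 = (e1 * e2) \<cdot>\<^sub>m t2" using h1 h2 e1(1) e2(1) by auto
    then show "t1 = t2" using sigma_prop[OF t1 t2] by blast
  qed
  have "perm q C ` sigma q = sigma q" by (rule endo_inj_surj[OF finite_sigma im inj])
  then show ?thesis using inj unfolding bij_betw_def by blast
qed

lemma key_inv:
  assumes q: "q \<ge> 1" and t: "\<tau> \<in> sigma q"
    and Cf: "\<And>\<tau>'. \<tau>' \<in> sigma q \<Longrightarrow> Cf \<tau>' \<in> clifford q \<and> adj (Cf \<tau>') \<in> clifford q \<and> Cf \<tau>' * \<tau> * adj (Cf \<tau>') = \<tau>'"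
    and Winv: "\<forall>C\<in>clifford_stab q \<tau>. phi2 C ` Wt \<subseteq> Wt"
    and Wc: "\<And>w. w \<in> Wt \<Longrightarrow> w \<in> carrier_mat (2^q * 2^q) (2^q * 2^q)"
    and C: "C \<in> clifford q" and t': "\<tau>' \<in> sigma q" and w: "w \<in> Wt"
  shows "phi2 C (phi2 (Cf \<tau>') w) \<in> phi2 (Cf (perm q C \<tau>')) ` Wt"
proof -
  let ?s = "perm q C \<tau>'"
  have s: "?s \<in> sigma q" using perm_prop[OF q C t'] by blast
  obtain e where e: "e = 1 \<or> e = -1" "C * \<tau>' * adj C = e \<cdot>\<^sub>m ?s" using perm_prop[OF q C t'] by blast
  have A: "Cf \<tau>' \<in> clifford q" "Cf \<tau>' * \<tau> * adj (Cf \<tau>') = \<tau>'" using Cf[OF t'] by auto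
  have B: "Cf ?s \<in> clifford q" "adj (Cf ?s) \<in> clifford q" "Cf ?s * \<tau> * adj (Cf ?s) = ?s" using Cf[OF s] by auto
  let ?n = "2^q"
  have c: "C \<in> carrier_mat ?n ?n" "adj C \<in> carrier_mat ?n ?n"
    "Cf \<tau>' \<in> carrier_mat ?n ?n" "adj (Cf \<tau>') \<in> carrier_mat ?n ?n"
    "Cf ?s \<in> carrier_mat ?n ?n" "adj (Cf ?s) \<in> carrier_mat ?n ?n"
    using C A(1) B(1) clifford_carrier adj_carrier2 by blast+
  have tc: "\<tau> \<in> carrier_mat ?n ?n" "?s \<in> carrier_mat ?n ?n" using t s sigma_carrier by blast+
  define D where "D = adj (Cf ?s) * C * Cf \<tau>'"
  have Dcl: "D \<in> clifford q" unfolding D_def by (intro clifford_mult B(2) C A(1))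
  have adjD: "adj D = adj (Cf \<tau>') * adj C * Cf ?s"
  proof -
    have "adj D = adj (Cf \<tau>') * adj (adj (Cf ?s) * C)"
      unfolding D_def by (rule adj_mult[OF mult_carrier_mat[OF c(6) c(1)] c(3)])
    also have "adj (adj (Cf ?s) * C) = adj C * Cf ?s" using adj_mult[OF c(6) c(1)] by simp
    finally show ?thesis using c by (simp add: assoc_sq[where n="2^q"])
  qed
  have "D * \<tau> * adj D = adj (Cf ?s) * (C * (Cf \<tau>' * \<tau> * adj (Cf \<tau>')) * adj C) * Cf ?s"
    unfolding adjD unfolding D_def using c tc by (simp add: assoc_sq[where n="2^q"] mult_sq[where n="2^q"])
  also have "\<dots> = adj (Cf ?s) * (e \<cdot>\<^sub>m ?s) * Cf ?s" unfolding A(2) e(2) ..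
  also have "\<dots> = e \<cdot>\<^sub>m (adj (Cf ?s) * ?s * Cf ?s)" using c tc by (simp add: mult_smult_distrib)
  also have "adj (Cf ?s) * ?s * Cf ?s = \<tau>"
    using conj_back[OF B(1) tc(1)] B(3) by simp
  finally have "D * \<tau> * adj D = e \<cdot>\<^sub>m \<tau>" .
  hence "D \<in> clifford_stab q \<tau>" unfolding clifford_stab_def using Dcl e(1) by auto
  hence Dw: "phi2 D w \<in> Wt" using Winv w by blast
  have "C * Cf \<tau>' = Cf ?s * D"
  proof -
    have "Cf ?s * D = (Cf ?s * adj (Cf ?s)) * C * Cf \<tau>'" unfolding D_def using c
      by (simp add: assoc_sq[where n="2^q"] mult_sq[where n="2^q"])
    also have "\<dots> = C * Cf \<tau>'" using clifford_unit[OF B(1)] c by simp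
    finally show ?thesis by simp
  qed
  have Dc: "D \<in> carrier_mat ?n ?n" using Dcl clifford_carrier by blast
  have "phi2 C (phi2 (Cf \<tau>') w) = phi2 (C * Cf \<tau>') w" by (rule phi2_mult[OF c(1) c(3) Wc[OF w], symmetric])
  also have "\<dots> = phi2 (Cf ?s * D) w" unfolding \<open>C * Cf \<tau>' = Cf ?s * D\<close> ..
  also have "\<dots> = phi2 (Cf ?s) (phi2 D w)" by (rule phi2_mult[OF c(5) Dc Wc[OF w]])
  finally show ?thesis using Dw by blast
qed

theorem lemma7:
  fixes q :: nat
  assumes "q \<ge> 1"
  shows "is_direct_sum (2 ^ q * 2 ^ q) (Vspace q) (sigma q) (Vtau q) \<and>
         (\<forall>\<tau> \<in> sigma q. \<forall>Wt.
           msubspace (2 ^ q * 2 ^ q) Wt \<and> Wt \<subseteq> Vtau q \<tau> \<and>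
           (\<forall>C \<in> clifford_stab q \<tau>. phi2 C ` Wt \<subseteq> Wt)
         \<longrightarrow> (\<exists>W :: complex mat \<Rightarrow> complex mat set.
               W \<tau> = Wt \<and>
               (\<forall>\<tau>' \<in> sigma q. msubspace (2 ^ q * 2 ^ q) (W \<tau>') \<and> W \<tau>' \<subseteq> Vtau q \<tau>' \<and>
                                 lin_iso (W \<tau>') Wt) \<and>
               is_direct_sum (2 ^ q * 2 ^ q) (dsum (2 ^ q * 2 ^ q) (sigma q) W) (sigma q) W \<and>
               (\<forall>C \<in> clifford q. phi2 C ` dsum (2 ^ q * 2 ^ q) (sigma q) W
                                   \<subseteq> dsum (2 ^ q * 2 ^ q) (sigma q) W)))"
proof (intro conjI ballI allI impI)
  have q: "q \<ge> 1" using assms .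
  let ?N = "2 ^ q * 2 ^ q"
  show P1: "is_direct_sum ?N (Vspace q) (sigma q) (Vtau q)" by (rule part1)
  fix \<tau> Wt assume t: "\<tau> \<in> sigma q"
    and H: "msubspace ?N Wt \<and> Wt \<subseteq> Vtau q \<tau> \<and> (\<forall>C\<in>clifford_stab q \<tau>. phi2 C ` Wt \<subseteq> Wt)"
  have Wsub: "msubspace ?N Wt" and WV: "Wt \<subseteq> Vtau q \<tau>" and Winv: "\<forall>C\<in>clifford_stab q \<tau>. phi2 C ` Wt \<subseteq> Wt"
    using H by auto
  have Wc: "\<And>w. w \<in> Wt \<Longrightarrow> w \<in> carrier_mat ?N ?N" using Wsub msubspace_carrier by blast
  define Cf where "Cf = (\<lambda>\<tau>'. if \<tau>' = \<tau> then 1\<^sub>m (2^q)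
      else (SOME C. C \<in> clifford q \<and> adj C \<in> clifford q \<and> C * \<tau> * adj C = \<tau>'))"
  have Cf: "Cf \<tau>' \<in> clifford q \<and> adj (Cf \<tau>') \<in> clifford q \<and> Cf \<tau>' * \<tau> * adj (Cf \<tau>') = \<tau>'"
    if t': "\<tau>' \<in> sigma q" for \<tau>'
  proof (cases "\<tau>' = \<tau>")
    case True
    have "1\<^sub>m (2^q) * \<tau> * adj (1\<^sub>m (2^q)) = \<tau>" using sigma_carrier[OF t] by simp
    then show ?thesis using True one_clifford[of q] by (simp add: Cf_def)
  next
    case False
    have "Cf \<tau>' = (SOME C. C \<in> clifford q \<and> adj C \<in> clifford q \<and> C * \<tau> * adj C = \<tau>')"
      using False by (simp add: Cf_def)
    then show ?thesis using someI_ex[OF trans_sigma[OF q t t']] by simp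
  qed
  have Cfc: "Cf \<tau>' \<in> carrier_mat (2^q) (2^q)" "adj (Cf \<tau>') \<in> carrier_mat (2^q) (2^q)"
    if "\<tau>' \<in> sigma q" for \<tau>' using Cf[OF that] clifford_carrier by blast+
  define W where "W = (\<lambda>\<tau>'. phi2 (Cf \<tau>') ` Wt)"
  have WVt: "W \<tau>' \<subseteq> Vtau q \<tau>'" if t': "\<tau>' \<in> sigma q" for \<tau>'
    unfolding W_def using phi2_Vtau[OF q _ t t'] Cf[OF t'] WV by blast
  have Wcar: "W \<tau>' \<subseteq> carrier_mat ?N ?N" if t': "\<tau>' \<in> sigma q" for \<tau>'
    unfolding W_def using phi2_carrier[OF Cfc(1)[OF t']] Wc by blast
  show "\<exists>W :: complex mat \<Rightarrow> complex mat set.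
               W \<tau> = Wt \<and>
               (\<forall>\<tau>' \<in> sigma q. msubspace ?N (W \<tau>') \<and> W \<tau>' \<subseteq> Vtau q \<tau>' \<and> lin_iso (W \<tau>') Wt) \<and>
               is_direct_sum ?N (dsum ?N (sigma q) W) (sigma q) W \<and>
               (\<forall>C \<in> clifford q. phi2 C ` dsum ?N (sigma q) W \<subseteq> dsum ?N (sigma q) W)"
  proof (intro exI[of _ W] conjI ballI)
    show "W \<tau> = Wt"
    proof -
      have "W \<tau> = phi2 (1\<^sub>m (2^q)) ` Wt" unfolding W_def Cf_def by simp
      also have "\<dots> = Wt" using phi2_one Wc by (simp add: image_cong[OF refl, of Wt _ id])
      finally show ?thesis .
    qed
  next
    fix \<tau>' assume t': "\<tau>' \<in> sigma q"
    let ?C = "Cf \<tau>'"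
    note cc = Cfc[OF t']
    show "W \<tau>' \<subseteq> Vtau q \<tau>'" by (rule WVt[OF t'])
    show "msubspace ?N (W \<tau>')"
      unfolding msubspace_def
    proof (intro conjI ballI allI)
      show "W \<tau>' \<subseteq> carrier_mat ?N ?N" by (rule Wcar[OF t'])
      have "0\<^sub>m ?N ?N \<in> Wt" using Wsub by (simp add: msubspace_def)
      moreover have "phi2 ?C (0\<^sub>m ?N ?N) = 0\<^sub>m ?N ?N" by (rule phi2_zero[OF cc(1)])
      ultimately show "0\<^sub>m ?N ?N \<in> W \<tau>'" unfolding W_def by (metis image_eqI)
    next
      fix A B assume "A \<in> W \<tau>'" "B \<in> W \<tau>'"
      then obtain a b where ab: "a \<in> Wt" "b \<in> Wt" "A = phi2 ?C a" "B = phi2 ?C b" unfolding W_def by blast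
      have "a + b \<in> Wt" using ab Wsub by (simp add: msubspace_def)
      moreover have "phi2 ?C (a + b) = A + B" using phi2_add[OF cc(1) Wc[OF ab(1)] Wc[OF ab(2)]] ab by simp
      ultimately show "A + B \<in> W \<tau>'" unfolding W_def by (metis image_eqI)
    next
      fix k A assume "A \<in> W \<tau>'"
      then obtain a where a: "a \<in> Wt" "A = phi2 ?C a" unfolding W_def by blast
      have "k \<cdot>\<^sub>m a \<in> Wt" using a Wsub by (simp add: msubspace_def)
      moreover have "phi2 ?C (k \<cdot>\<^sub>m a) = k \<cdot>\<^sub>m A" using phi2_smult[OF cc(1) Wc[OF a(1)]] a by simp
      ultimately show "k \<cdot>\<^sub>m A \<in> W \<tau>'" unfolding W_def by (metis image_eqI)
    qed
    show "lin_iso (W \<tau>') Wt"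
      unfolding lin_iso_def
    proof (intro exI[of _ "phi2 (adj ?C)"] conjI ballI allI)
      have inv: "phi2 (adj ?C) (phi2 ?C a) = a" if "a \<in> Wt" for a
        by (rule phi2_inv[OF conjunct1[OF Cf[OF t']] Wc[OF that]])
      show "bij_betw (phi2 (adj ?C)) (W \<tau>') Wt"
        unfolding bij_betw_def
      proof
        show "inj_on (phi2 (adj ?C)) (W \<tau>')"
          unfolding W_def by (rule inj_onI) (auto simp: inv)
        show "phi2 (adj ?C) ` W \<tau>' = Wt"
          unfolding W_def image_image using inv by (simp add: image_cong[OF refl, of Wt _ id])
      qed
    next
      fix A B assume "A \<in> W \<tau>'" "B \<in> W \<tau>'"
      then show "phi2 (adj ?C) (A + B) = phi2 (adj ?C) A + phi2 (adj ?C) B"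
        using phi2_add[OF cc(2)] Wcar[OF t'] by blast
    next
      fix k A assume "A \<in> W \<tau>'"
      then show "phi2 (adj ?C) (k \<cdot>\<^sub>m A) = k \<cdot>\<^sub>m phi2 (adj ?C) A"
        using phi2_smult[OF cc(2)] Wcar[OF t'] by blast
    qed
  next
    show "is_direct_sum ?N (dsum ?N (sigma q) W) (sigma q) W"
      unfolding is_direct_sum_def
    proof (intro conjI refl allI impI)
      fix f assume f: "(\<forall>i\<in>sigma q. f i \<in> W i) \<and> msum ?N f (sigma q) = 0\<^sub>m ?N ?N"
      have "\<forall>i\<in>sigma q. f i \<in> Vtau q i" using f WVt by blast
      then show "\<forall>i\<in>sigma q. f i = 0\<^sub>m ?N ?N" using P1 f unfolding is_direct_sum_def by blast
    qed
  next
    fix C assume C: "C \<in> clifford q"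
    have Cc: "C \<in> carrier_mat (2^q) (2^q)" using C clifford_carrier by blast
    show "phi2 C ` dsum ?N (sigma q) W \<subseteq> dsum ?N (sigma q) W"
    proof
      fix X assume "X \<in> phi2 C ` dsum ?N (sigma q) W"
      then obtain g where g: "X = phi2 C (msum ?N g (sigma q))" "\<forall>i\<in>sigma q. g i \<in> W i"
        unfolding dsum_def by blast
      have gc: "\<And>i. i \<in> sigma q \<Longrightarrow> g i \<in> carrier_mat ?N ?N" using g(2) Wcar by blast
      let ?p = "inv_into (sigma q) (perm q C)"
      have pb: "bij_betw (perm q C) (sigma q) (sigma q)" by (rule perm_bij[OF q C])
      have ip: "bij_betw ?p (sigma q) (sigma q)" by (rule bij_betw_inv_into[OF pb])
      have "X = msum ?N (\<lambda>i. phi2 C (g i)) (sigma q)"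
        unfolding g(1) by (rule phi2_msum[OF Cc finite_sigma gc])
      also have "\<dots> = msum ?N (\<lambda>s. phi2 C (g (?p s))) (sigma q)" by (rule msum_reindex[OF ip])
      finally have X: "X = msum ?N (\<lambda>s. phi2 C (g (?p s))) (sigma q)" .
      have "\<forall>s\<in>sigma q. phi2 C (g (?p s)) \<in> W s"
      proof
        fix s assume s: "s \<in> sigma q"
        let ?t = "?p s"
        have t': "?t \<in> sigma q" using ip s bij_betwE by blast
        have ps: "perm q C ?t = s" using bij_betw_inv_into_right[OF pb s] .
        obtain w where w: "w \<in> Wt" "g ?t = phi2 (Cf ?t) w" using g(2) t' unfolding W_def by blast
        have "phi2 C (phi2 (Cf ?t) w) \<in> phi2 (Cf (perm q C ?t)) ` Wt"
          by (rule key_inv[OF q t Cf Winv Wc C t' w(1)])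
        then show "phi2 C (g ?t) \<in> W s" unfolding W_def ps w(2) .
      qed
      then show "X \<in> dsum ?N (sigma q) W" using X by (intro dsum_intro) auto
    qed
  qed
qed

end
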